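(* Let $\mathsf{C^\infty Var}:=(\mathsf{C^\infty Alg}_{\mathrm{fg}})^{\mathrm{op}}$ be the category of $\mathcal{C}^{\infty}$-varieties, let $W$ be a local Artinian $\mathbb{R}$-algebra (with its canonical $\mathcal{C}^\infty$-algebra structure) and $D=\mathrm{Spec}\,W$. Then the functor $(-)\times D:\mathsf{C^\infty Var}\to\mathsf{C^\infty Var}$ has a right adjoint $Y\mapsto Y^D$; that is, for every $\mathcal{C}^{\infty}$-variety $Y$ there is a $\mathcal{C}^{\infty}$-variety $Y^D$ with $\mathrm{Hom}_{\mathsf{C^\infty Var}}(X,Y^D)\cong\mathrm{Hom}_{\mathsf{C^\infty Var}}(X\times D,Y)$ naturally in $X\in\mathsf{C^\infty Var}$.
   Context: A $\mathcal{C}^{\infty}$-algebra is a finite-product-preserving functor $\mathsf{CartSp}\to\mathsf{Set}$, where $\mathsf{CartSp}$ has objects $\mathbb{R}^n$ ($n\ge0$) and smooth maps; it is finitely generated if isomorphic to $\mathcal{C}^{\infty}(\mathbb{R}^n)/I$ for an ideal $I$ of its underlying ring. $\mathrm{Spec}\,A$ denotes $A$ regarded as an object of the opposite category. The product $X\times D$ in $\mathsf{C^\infty Var}$ corresponds to the $\mathcal{C}^\infty$-tensor product (coproduct of $\mathcal{C}^\infty$-algebras) $\mathcal{O}(X)\widehat{\otimes}W$. A local Artinian $\mathbb{R}$-algebra is a finite-dimensional commutative $\mathbb{R}$-algebra $W$ with a maximal ideal $\mathfrak m_W$ such that $W/\mathfrak m_W\cong\mathbb{R}$ and $\mathfrak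 m_W^N=0$ for some $N$; such $W$ lifts uniquely to a (finitely presented) $\mathcal{C}^\infty$-algebra. *)

theory Defs
  imports "HOL-Analysis.Analysis"
begin

text \<open>Points of R^n are encoded as functions nat => real (only the first n coordinates
matter); a function on R^n is a function (nat => real) => real depending only on the
first n coordinates. The space nat => real carries the product topology.\<close>

type_synonym fn = "(nat \<Rightarrow> real) \<Rightarrow> real"

coinductive smooth :: "nat \<Rightarrow> fn \<Rightarrow> bool" for n :: nat where
  "(\<forall>x. f x = f (\<lambda>i. if i < n then x i else 0)) \<Longrightarrow>
   continuous_on UNIV f \<Longrightarrow>
   (\<forall>i<n. \<exists>f'. smooth n f' \<and>
      (\<forall>x. ((\<lambda>t. f (x(i := t))) has_real_derivative f' x) (at (x i)))) \<Longrightarrow>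
   smooth n f"

definition Cinf :: "nat \<Rightarrow> fn set" where
  "Cinf n = {f. smooth n f}"

definition is_ideal :: "nat \<Rightarrow> fn set \<Rightarrow> bool" where
  "is_ideal n I \<longleftrightarrow> I \<subseteq> Cinf n \<and> (\<lambda>x. 0) \<in> I \<and>
     (\<forall>f\<in>I. \<forall>g\<in>I. (\<lambda>x. f x + g x) \<in> I) \<and>
     (\<forall>a\<in>Cinf n. \<forall>f\<in>I. (\<lambda>x. a x * f x) \<in> I)"

definition ideal_gen :: "nat \<Rightarrow> fn set \<Rightarrow> fn set" where
  "ideal_gen n S = \<Inter>{I. is_ideal n I \<and> S \<subseteq> I}"

text \<open>Congruence modulo an ideal (equality in C-infinity(R^n)/I).\<close>
definition ceq :: "fn set \<Rightarrow> fn \<Rightarrow> fn \<Rightarrow> bool" where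
  "ceq I f g \<longleftrightarrow> (\<lambda>x. f x - g x) \<in> I"

definition cinf_op :: "nat \<Rightarrow> fn \<Rightarrow> (nat \<Rightarrow> fn) \<Rightarrow> fn" where
  "cinf_op k g fs = (\<lambda>x. g (\<lambda>j. if j < k then fs j x else 0))"

text \<open>A morphism of C-infinity-algebras C-infinity(R^n)/I -> C-infinity(R^m)/J, given on
representatives: well defined on classes and commuting with all C-infinity operations.\<close>
definition alg_hom :: "nat \<Rightarrow> fn set \<Rightarrow> nat \<Rightarrow> fn set \<Rightarrow> (fn \<Rightarrow> fn) \<Rightarrow> bool" where
  "alg_hom n I m J h \<longleftrightarrow>
     (\<forall>f\<in>Cinf n. h f \<in> Cinf m) \<and>
     (\<forall>f\<in>Cinf n. \<forall>g\<in>Cinf n. ceq I f g \<longrightarrow> ceq J (h f) (h g)) \<and>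
     (\<forall>k. \<forall>g\<in>Cinf k. \<forall>fs :: nat \<Rightarrow> fn. (\<forall>j<k. fs j \<in> Cinf n) \<longrightarrow>
        ceq J (h (cinf_op k g fs)) (cinf_op k g (\<lambda>j. h (fs j))))"

text \<open>Equality of two morphisms out of C-infinity(R^n)/_ into _/J.\<close>
definition hom_equiv :: "nat \<Rightarrow> fn set \<Rightarrow> (fn \<Rightarrow> fn) \<Rightarrow> (fn \<Rightarrow> fn) \<Rightarrow> bool" where
  "hom_equiv n J h1 h2 \<longleftrightarrow> (\<forall>f\<in>Cinf n. ceq J (h1 f) (h2 f))"

text \<open>C-infinity(R^k)/J is, as an R-algebra, local Artinian: finite dimensional, with a
maximal ideal M/J with residue field R and (M/J)^N = 0.\<close>
definition local_artinian :: "nat \<Rightarrow> fn set \<Rightarrow> bool" where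
  "local_artinian k J \<longleftrightarrow> is_ideal k J \<and>
     (\<exists>B. finite B \<and> B \<subseteq> Cinf k \<and>
        (\<forall>f\<in>Cinf k. \<exists>c :: fn \<Rightarrow> real. ceq J f (\<lambda>x. \<Sum>b\<in>B. c b * b x))) \<and>
     (\<exists>M N. is_ideal k M \<and> J \<subseteq> M \<and> M \<noteq> Cinf k \<and>
        (\<forall>f\<in>Cinf k. \<exists>c::real. ceq M f (\<lambda>x. c)) \<and>
        (\<forall>fs :: nat \<Rightarrow> fn. (\<forall>j<N. fs j \<in> M) \<longrightarrow> (\<lambda>x. \<Prod>j<N. fs j x) \<in> J))"

text \<open>Coproduct (C-infinity tensor product) of C-infinity(R^n)/I and C-infinity(R^k)/J:
C-infinity(R^(n+k))/(I,J), X-variables first, then the k variables of W.\<close>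
definition shift_fun :: "nat \<Rightarrow> fn \<Rightarrow> fn" where
  "shift_fun n g = (\<lambda>z. g (\<lambda>j. z (n + j)))"

definition tensor_ideal :: "nat \<Rightarrow> fn set \<Rightarrow> nat \<Rightarrow> fn set \<Rightarrow> fn set" where
  "tensor_ideal n I k J = ideal_gen (n + k)
     ({(\<lambda>z. f (\<lambda>i. if i < n then z i else 0)) | f. f \<in> I} \<union> {shift_fun n g | g. g \<in> J})"

text \<open>For u : C-infinity(R^n)/I -> C-infinity(R^n')/I', the map u (x) id_W on the
coproducts (i.e. the algebra map of u x id_D).\<close>
definition tensor_map :: "nat \<Rightarrow> nat \<Rightarrow> nat \<Rightarrow> (fn \<Rightarrow> fn) \<Rightarrow> fn \<Rightarrow> fn" where
  "tensor_map n n' k u F = (\<lambda>z. F (\<lambda>i. if i < n then u (\<lambda>x. x i) z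
       else if i < n + k then z (n' + (i - n)) else 0))"

end

theory Submission
  imports Defs
begin

definition trunc :: "nat \<Rightarrow> (nat \<Rightarrow> real) \<Rightarrow> (nat \<Rightarrow> real)" where
  "trunc n x = (\<lambda>i. if i < n then x i else 0)"

definition hasp :: "nat \<Rightarrow> fn \<Rightarrow> fn \<Rightarrow> bool" where
  "hasp i f f' \<longleftrightarrow> (\<forall>x. ((\<lambda>t. f (x(i := t))) has_real_derivative f' x) (at (x i)))"

lemma smooth_iff: "smooth n f \<longleftrightarrow> (\<forall>x. f x = f (trunc n x)) \<and> continuous_on UNIV f \<and>
   (\<forall>i<n. \<exists>f'. smooth n f' \<and> hasp i f f')"
  unfolding trunc_def hasp_def by (subst smooth.simps) auto

lemma smooth_coinduct_set:
  assumes "f \<in> X"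
    and "\<And>f. f \<in> X \<Longrightarrow> (\<forall>x. f x = f (trunc n x)) \<and> continuous_on UNIV f \<and>
          (\<forall>i<n. \<exists>f'. (f' \<in> X \<or> smooth n f') \<and> hasp i f f')"
  shows "smooth n f"
  using assms(1)
proof (coinduction arbitrary: f rule: smooth.coinduct)
  case (smooth f)
  from assms(2)[OF smooth] show ?case unfolding trunc_def hasp_def by metis
qed

lemma smooth_D: "smooth n f \<Longrightarrow> (\<forall>x. f x = f (trunc n x)) \<and> continuous_on UNIV f \<and>
   (\<forall>i<n. \<exists>f'. smooth n f' \<and> hasp i f f')"
  using smooth_iff[of n f] by (rule iffD1)

lemma smooth_dep: "smooth n f \<Longrightarrow> f x = f (trunc n x)"
  using smooth_D by blast

lemma smooth_cont: "smooth n f \<Longrightarrow> continuous_on UNIV f"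
  using smooth_D by blast

definition pder :: "nat \<Rightarrow> nat \<Rightarrow> fn \<Rightarrow> fn" where
  "pder n i f = (SOME f'. smooth n f' \<and> hasp i f f')"

lemma pder: assumes "smooth n f" "i < n" shows "smooth n (pder n i f)" "hasp i f (pder n i f)"
proof -
  from smooth_D[OF assms(1)] assms(2) have "\<exists>f'. smooth n f' \<and> hasp i f f'" by blast
  then have "smooth n (pder n i f) \<and> hasp i f (pder n i f)" unfolding pder_def by (rule someI_ex)
  then show "smooth n (pder n i f)" "hasp i f (pder n i f)" by auto
qed

lemma trunc_trunc[simp]: "trunc n (trunc n x) = trunc n x"
  by (auto simp: trunc_def)

lemma smooth_const: "smooth n (\<lambda>x. c)"
proof -
  have "(\<lambda>x. c) \<in> {(\<lambda>x. c) | c. True}" by auto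
  then show ?thesis
  proof (rule smooth_coinduct_set)
    fix f :: fn assume "f \<in> {(\<lambda>x. c) | c::real. True}"
    then obtain c where f: "f = (\<lambda>x. c)" by auto
    have "hasp i f (\<lambda>x. 0)" for i unfolding f hasp_def by auto
    then show "(\<forall>x. f x = f (trunc n x)) \<and> continuous_on UNIV f \<and>
          (\<forall>i<n. \<exists>f'. (f' \<in> {(\<lambda>x. c) | c::real. True} \<or> smooth n f') \<and> hasp i f f')"
    proof (intro conjI allI impI)
      show "continuous_on UNIV f" unfolding f by simp
      fix i assume "i < n"
      show "\<exists>f'. (f' \<in> {(\<lambda>x. c) | c::real. True} \<or> smooth n f') \<and> hasp i f f'"
        by (rule exI[of _ "\<lambda>x. 0"]) (auto simp: f hasp_def)
    qed (simp add: f)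
  qed
qed

lemma smooth_coord: assumes "j < n" shows "smooth n (\<lambda>x. x j)"
proof -
  have "(\<lambda>x. x j) \<in> {(\<lambda>x. x j)}" by auto
  then show ?thesis
  proof (rule smooth_coinduct_set)
    fix f assume "f \<in> {(\<lambda>x::nat\<Rightarrow>real. x j)}"
    then have f: "f = (\<lambda>x. x j)" by auto
    have "hasp i f (\<lambda>x. if i = j then 1 else 0)" for i
      unfolding f hasp_def by (auto intro!: derivative_eq_intros)
    then show "(\<forall>x. f x = f (trunc n x)) \<and> continuous_on UNIV f \<and>
          (\<forall>i<n. \<exists>f'. (f' \<in> {(\<lambda>x::nat\<Rightarrow>real. x j)} \<or> smooth n f') \<and> hasp i f f')"
      unfolding f using assms by (auto simp: trunc_def intro!: smooth_const)
  qed
qed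

inductive_set SPs :: "nat \<Rightarrow> fn set" for n where
  SPs_mult: "smooth n f \<Longrightarrow> smooth n g \<Longrightarrow> (\<lambda>x. f x * g x) \<in> SPs n"
| SPs_add: "f \<in> SPs n \<Longrightarrow> g \<in> SPs n \<Longrightarrow> (\<lambda>x. f x + g x) \<in> SPs n"

lemma SPs_props:
  assumes "f \<in> SPs n"
  shows "(\<forall>x. f x = f (trunc n x)) \<and> continuous_on UNIV f \<and>
          (\<forall>i<n. \<exists>f'. f' \<in> SPs n \<and> hasp i f f')"
  using assms
proof induction
  case (SPs_mult f g)
  have c: "continuous_on UNIV (\<lambda>x. f x * g x)"
    using smooth_cont[OF SPs_mult(1)] smooth_cont[OF SPs_mult(2)] by (intro continuous_intros)
  have d: "\<exists>f'. f' \<in> SPs n \<and> hasp i (\<lambda>x. f x * g x) f'" if "i < n" for i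
  proof -
    have f': "smooth n (pder n i f)" "hasp i f (pder n i f)" using pder[OF SPs_mult(1) that] by auto
    have g': "smooth n (pder n i g)" "hasp i g (pder n i g)" using pder[OF SPs_mult(2) that] by auto
    let ?h = "\<lambda>x. (\<lambda>x. pder n i f x * g x) x + (\<lambda>x. f x * pder n i g x) x"
    have "?h \<in> SPs n" using f'(1) g'(1) SPs_mult by (intro SPs.intros)
    moreover have "hasp i (\<lambda>x. f x * g x) ?h"
      unfolding hasp_def
    proof
      fix x
      have "((\<lambda>t. f (x(i := t))) has_real_derivative pder n i f x) (at (x i))"
        using f'(2) unfolding hasp_def by blast
      moreover have "((\<lambda>t. g (x(i := t))) has_real_derivative pder n i g x) (at (x i))"
        using g'(2) unfolding hasp_def by blast
      ultimately have "((\<lambda>t. f (x(i := t)) * g (x(i := t))) has_real_derivative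
          pder n i f x * g (x(i := x i)) + pder n i g x * f (x(i := x i))) (at (x i))"
        by (rule DERIV_mult)
      then show "((\<lambda>t. f (x(i := t)) * g (x(i := t))) has_real_derivative ?h x) (at (x i))"
        by (simp add: mult.commute)
    qed
    ultimately show ?thesis by blast
  qed
  show ?case using smooth_dep[OF SPs_mult(1)] smooth_dep[OF SPs_mult(2)] c d by metis
next
  case (SPs_add f g)
  have c: "continuous_on UNIV (\<lambda>x. f x + g x)"
    using SPs_add.IH by (intro continuous_intros) auto
  have d: "\<exists>f'. f' \<in> SPs n \<and> hasp i (\<lambda>x. f x + g x) f'" if i: "i < n" for i
  proof -
    obtain f' g' where f': "f' \<in> SPs n" "hasp i f f'" and g': "g' \<in> SPs n" "hasp i g g'"
      using SPs_add.IH i by blast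
    have "(\<lambda>x. f' x + g' x) \<in> SPs n" using f' g' by (intro SPs.intros)
    moreover have "hasp i (\<lambda>x. f x + g x) (\<lambda>x. f' x + g' x)"
      using f'(2) g'(2) unfolding hasp_def by (auto intro!: DERIV_add)
    ultimately show ?thesis by blast
  qed
  show ?case using SPs_add.IH c d by metis
qed

lemma SPs_smooth: "f \<in> SPs n \<Longrightarrow> smooth n f"
  by (erule smooth_coinduct_set) (use SPs_props in blast)

lemma smooth_mult: "smooth n f \<Longrightarrow> smooth n g \<Longrightarrow> smooth n (\<lambda>x. f x * g x)"
  by (rule SPs_smooth, rule SPs_mult)

lemma smooth_add: "smooth n f \<Longrightarrow> smooth n g \<Longrightarrow> smooth n (\<lambda>x. f x + g x)"
proof -
  assume "smooth n f" "smooth n g"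
  then have "(\<lambda>x. (\<lambda>x. f x * 1) x + (\<lambda>x. g x * 1) x) \<in> SPs n"
    by (intro SPs_add[of "\<lambda>x. f x * 1" n "\<lambda>x. g x * 1"] SPs_mult[of n _ "\<lambda>x. 1"] smooth_const)
  then show ?thesis by (auto dest: SPs_smooth)
qed

lemma smooth_scale: "smooth n f \<Longrightarrow> smooth n (\<lambda>x. c * f x)"
  using smooth_mult[OF smooth_const] .

lemma smooth_neg: "smooth n f \<Longrightarrow> smooth n (\<lambda>x. - f x)"
  using smooth_scale[of n f "-1"] by simp

lemma smooth_diff: "smooth n f \<Longrightarrow> smooth n g \<Longrightarrow> smooth n (\<lambda>x. f x - g x)"
  using smooth_add[OF _ smooth_neg, of n f g] by simp

lemma smooth_sum: "(\<And>a. a \<in> A \<Longrightarrow> smooth n (F a)) \<Longrightarrow> smooth n (\<lambda>x. \<Sum>a\<in>A. F a x)"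
proof (induction A rule: infinite_finite_induct)
  case (infinite A) then show ?case by (simp add: smooth_const)
next
  case empty then show ?case by (simp add: smooth_const)
next
  case (insert a A) then show ?case by (simp add: smooth_add)
qed

lemma smooth_prod: "(\<And>a. a \<in> A \<Longrightarrow> smooth n (F a)) \<Longrightarrow> smooth n (\<lambda>x. \<Prod>a\<in>A. F a x)"
proof (induction A rule: infinite_finite_induct)
  case (infinite A) then show ?case by (simp add: smooth_const)
next
  case empty then show ?case by (simp add: smooth_const)
next
  case (insert a A) then show ?case by (simp add: smooth_mult)
qed

lemma smooth_mono:
  assumes "smooth n f" "n \<le> n'" shows "smooth n' f"
proof -
  have "f \<in> {f. \<exists>n\<le>n'. smooth n f}" using assms by auto
  then show ?thesis
  proof (rule smooth_coinduct_set)
    fix f assume "f \<in> {f. \<exists>n\<le>n'. smooth n f}"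
    then obtain n where n: "n \<le> n'" "smooth n f" by auto
    have dep: "f x = f (trunc n' x)" for x
    proof -
      have "trunc n (trunc n' x) = trunc n x" using n(1) by (auto simp: trunc_def)
      then show ?thesis using smooth_dep[OF n(2), of x] smooth_dep[OF n(2), of "trunc n' x"] by simp
    qed
    have d: "\<exists>f'. (f' \<in> {f. \<exists>n\<le>n'. smooth n f} \<or> smooth n' f') \<and> hasp i f f'" if "i < n'" for i
    proof (cases "i < n")
      case True
      then show ?thesis using pder[OF n(2) True] n(1) by blast
    next
      case False
      have "f (x(i := t)) = f x" for x t
      proof -
        have "trunc n (x(i := t)) = trunc n x" using False by (auto simp: trunc_def)
        then show ?thesis using smooth_dep[OF n(2), of x] smooth_dep[OF n(2), of "x(i:=t)"] by simp
      qed
      then have "hasp i f (\<lambda>x. 0)" unfolding hasp_def by simp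
      then show ?thesis using smooth_const by blast
    qed
    show "(\<forall>x. f x = f (trunc n' x)) \<and> continuous_on UNIV f \<and>
          (\<forall>i<n'. \<exists>f'. (f' \<in> {f. \<exists>n\<le>n'. smooth n f} \<or> smooth n' f') \<and> hasp i f f')"
      using dep d smooth_cont[OF n(2)] by blast
  qed
qed

definition mid :: "nat \<Rightarrow> (nat \<Rightarrow> real) \<Rightarrow> (nat \<Rightarrow> real) \<Rightarrow> (nat \<Rightarrow> real)" where
  "mid j u v = (\<lambda>l. if l < j then u l else v l)"

definition Hd :: "nat \<Rightarrow> fn \<Rightarrow> nat \<Rightarrow> (nat \<Rightarrow> real) \<Rightarrow> (nat \<Rightarrow> real) \<Rightarrow> real" where
  "Hd k G j u v = integral {0..1} (\<lambda>s. pder k j G ((mid j u v)(j := v j + s * (u j - v j))))"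

lemma hadamard_step:
  assumes "smooth k G" "j < k"
  shows "G (mid (Suc j) u v) - G (mid j u v) = Hd k G j u v * (u j - v j)"
proof -
  let ?m = "mid j u v"
  define \<phi> where "\<phi> s = G (?m(j := v j + s * (u j - v j)))" for s
  have h: "hasp j G (pder k j G)" using pder assms by blast
  have D: "(\<phi> has_real_derivative pder k j G (?m(j := v j + s*(u j - v j))) * (u j - v j)) (at s)" for s
  proof -
    have 1: "((\<lambda>\<tau>. G (?m(j := \<tau>))) has_real_derivative pder k j G (?m(j := v j + s*(u j - v j)))) (at (v j + s*(u j - v j)))"
      using h[unfolded hasp_def, rule_format, of "?m(j := v j + s*(u j - v j))"] by simp
    have 2: "((\<lambda>s. v j + s*(u j - v j)) has_real_derivative (u j - v j)) (at s)"
      by (auto intro!: derivative_eq_intros)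
    from DERIV_chain2[OF 1 2] show ?thesis unfolding \<phi>_def by simp
  qed
  have "((\<lambda>s. pder k j G (?m(j := v j + s*(u j - v j))) * (u j - v j)) has_integral (\<phi> 1 - \<phi> 0)) {0..1}"
    by (rule fundamental_theorem_of_calculus)
       (auto simp: has_real_derivative_iff_has_vector_derivative[symmetric] intro!: has_field_derivative_at_within D)
  then have "integral {0..1} (\<lambda>s. pder k j G (?m(j := v j + s*(u j - v j))) * (u j - v j)) = \<phi> 1 - \<phi> 0"
    by (rule integral_unique)
  moreover have "?m(j := v j + 1 * (u j - v j)) = mid (Suc j) u v"
    by (auto simp: mid_def fun_eq_iff)
  moreover have "?m(j := v j + 0 * (u j - v j)) = ?m"
    by (auto simp: mid_def fun_eq_iff)
  ultimately show ?thesis unfolding \<phi>_def Hd_def by simp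
qed

lemma hadamard_identity:
  assumes "smooth k G"
  shows "G u - G v = (\<Sum>j<k. Hd k G j u v * (u j - v j))"
proof -
  have "(\<Sum>j<k. G (mid (Suc j) u v) - G (mid j u v)) = G (mid k u v) - G (mid 0 u v)"
    by (rule sum_lessThan_telescope)
  moreover have "mid 0 u v = v" by (simp add: mid_def)
  moreover have "G (mid k u v) = G u"
  proof -
    have "trunc k (mid k u v) = trunc k u" by (auto simp: trunc_def mid_def)
    then show ?thesis using smooth_dep[OF assms, of u] smooth_dep[OF assms, of "mid k u v"] by simp
  qed
  moreover have "(\<Sum>j<k. G (mid (Suc j) u v) - G (mid j u v)) = (\<Sum>j<k. Hd k G j u v * (u j - v j))"
    using hadamard_step[OF assms] by simp
  ultimately show ?thesis by simp
qed

lemma cont_coord: "continuous_on S f \<Longrightarrow> continuous_on S (\<lambda>x. f x l)"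
  by (rule continuous_on_product_then_coordinatewise)

lemma Hd_cont:
  assumes "smooth k G" "j < k"
  shows "continuous_on UNIV (\<lambda>p. Hd k G j (fst p) (snd p))"
proof -
  have pc: "continuous_on UNIV (pder k j G)" using pder[OF assms] smooth_cont by blast
  define inner where "inner = (\<lambda>q::((nat\<Rightarrow>real)\<times>(nat\<Rightarrow>real))\<times>real. (\<lambda>l. if l = j then snd (fst q) j + snd q * (fst (fst q) j - snd (fst q) j)
       else if l < j then fst (fst q) l else snd (fst q) l))"
  have ic: "continuous_on UNIV inner"
  proof (rule continuous_on_coordinatewise_then_product)
    fix l
    have c1: "continuous_on UNIV (\<lambda>q::((nat\<Rightarrow>real)\<times>(nat\<Rightarrow>real))\<times>real. fst (fst q) l)" for l
      by (rule cont_coord) (intro continuous_intros)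
    have c2: "continuous_on UNIV (\<lambda>q::((nat\<Rightarrow>real)\<times>(nat\<Rightarrow>real))\<times>real. snd (fst q) l)" for l
      by (rule cont_coord) (intro continuous_intros)
    have c3: "continuous_on UNIV (\<lambda>q::((nat\<Rightarrow>real)\<times>(nat\<Rightarrow>real))\<times>real. snd q)"
      by (intro continuous_intros)
    show "continuous_on UNIV (\<lambda>q. inner q l)"
      unfolding inner_def
      by (cases "l = j"; cases "l < j") (simp_all add: c1 c2 continuous_on_add continuous_on_mult c3 continuous_on_diff)
  qed
  have "continuous_on UNIV (\<lambda>q. pder k j G (inner q))"
    using continuous_on_compose2[OF pc ic] by simp
  then have c2: "continuous_on (UNIV \<times> cbox 0 1) (\<lambda>(p, s). pder k j G (inner (p, s)))"
    by (auto intro: continuous_on_subset simp: case_prod_beta)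
  have "continuous_on UNIV (\<lambda>p. integral (cbox 0 (1::real)) (\<lambda>s. pder k j G (inner (p, s))))"
    by (rule integral_continuous_on_param[OF c2])
  moreover have "inner (p, s) = (mid j (fst p) (snd p))(j := snd p j + s * (fst p j - snd p j))" for p s
    by (auto simp: inner_def mid_def fun_eq_iff)
  ultimately show ?thesis unfolding Hd_def by simp
qed

lemma Hd_diag:
  assumes "smooth k G" "j < k"
  shows "Hd k G j w w = pder k j G w"
proof -
  have "(mid j w w)(j := w j + s * (w j - w j)) = w" for s by (auto simp: mid_def fun_eq_iff)
  then show ?thesis unfolding Hd_def by simp
qed

lemma Hd_trunc:
  assumes "smooth k G" "j < k"
  shows "Hd k G j u v = Hd k G j (trunc k u) (trunc k v)"
proof -
  have ps: "smooth k (pder k j G)" using pder[OF assms] by blast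
  have "pder k j G ((mid j u v)(j := v j + s * (u j - v j))) =
        pder k j G ((mid j (trunc k u) (trunc k v))(j := trunc k v j + s * (trunc k u j - trunc k v j)))" for s
  proof -
    have "trunc k ((mid j u v)(j := v j + s * (u j - v j))) =
          trunc k ((mid j (trunc k u) (trunc k v))(j := trunc k v j + s * (trunc k u j - trunc k v j)))"
      using assms(2) by (auto simp: trunc_def mid_def fun_eq_iff)
    then show ?thesis using smooth_dep[OF ps] by metis
  qed
  then show ?thesis unfolding Hd_def by simp
qed

lemma chain_rule:
  assumes G: "smooth k G" and c: "isCont \<gamma> t0"
    and d: "\<forall>j<k. ((\<lambda>t. \<gamma> t j) has_real_derivative \<gamma>' j) (at t0)"
  shows "((\<lambda>t. G (\<gamma> t)) has_real_derivative (\<Sum>j<k. pder k j G (\<gamma> t0) * \<gamma>' j)) (at t0)"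
proof -
  have "\<forall>j<k. \<exists>g. (\<forall>z. \<gamma> z j - \<gamma> t0 j = g z * (z - t0)) \<and> isCont g t0 \<and> g t0 = \<gamma>' j"
    using d by (simp add: CARAT_DERIV)
  then obtain g where g: "\<And>j. j < k \<Longrightarrow> (\<forall>z. \<gamma> z j - \<gamma> t0 j = g j z * (z - t0)) \<and> isCont (g j) t0 \<and> g j t0 = \<gamma>' j"
    by metis
  define F where "F z = (\<Sum>j<k. Hd k G j (\<gamma> z) (\<gamma> t0) * g j z)" for z
  have "\<forall>z. G (\<gamma> z) - G (\<gamma> t0) = F z * (z - t0)"
  proof
    fix z
    have "G (\<gamma> z) - G (\<gamma> t0) = (\<Sum>j<k. Hd k G j (\<gamma> z) (\<gamma> t0) * (\<gamma> z j - \<gamma> t0 j))"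
      by (rule hadamard_identity[OF G])
    also have "\<dots> = (\<Sum>j<k. Hd k G j (\<gamma> z) (\<gamma> t0) * g j z * (z - t0))"
      using g by (simp add: mult.assoc)
    also have "\<dots> = F z * (z - t0)" unfolding F_def by (simp add: sum_distrib_right)
    finally show "G (\<gamma> z) - G (\<gamma> t0) = F z * (z - t0)" .
  qed
  moreover have "isCont F t0"
  proof -
    have "isCont (\<lambda>z. Hd k G j (\<gamma> z) (\<gamma> t0)) t0" if "j < k" for j
    proof -
      have hc: "continuous_on UNIV (\<lambda>p. Hd k G j (fst p) (snd p))" by (rule Hd_cont[OF G that])
      have A: "isCont (\<lambda>p. Hd k G j (fst p) (snd p)) (\<gamma> t0, \<gamma> t0)"
        using hc by (simp add: continuous_on_eq_continuous_at)
      have B: "isCont (\<lambda>z. (\<gamma> z, \<gamma> t0)) t0" using c by (intro continuous_intros)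
      have "isCont (\<lambda>z. (\<lambda>p. Hd k G j (fst p) (snd p)) ((\<lambda>z. (\<gamma> z, \<gamma> t0)) z)) t0"
        by (rule isCont_o2[OF B]) (simp add: A)
      then show ?thesis by simp
    qed
    then show ?thesis unfolding F_def using g by (intro continuous_intros) auto
  qed
  moreover have "F t0 = (\<Sum>j<k. pder k j G (\<gamma> t0) * \<gamma>' j)"
    unfolding F_def using g Hd_diag[OF G] by simp
  ultimately show ?thesis by (subst CARAT_DERIV) blast
qed

lemma cont_upd: "continuous_on UNIV (\<lambda>t::real. x(i := t))"
proof (rule continuous_on_coordinatewise_then_product)
  fix l show "continuous_on UNIV (\<lambda>t. (x(i := t)) l)"
    by (cases "l = i") (simp_all add: continuous_on_id continuous_on_const)
qed

lemma smooth_cinf_op: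
  assumes "smooth k G" "\<forall>j<k. smooth n (fs j)"
  shows "smooth n (cinf_op k G fs)"
proof -
  let ?X = "{cinf_op k G fs | k G fs. smooth k G \<and> (\<forall>j<k. smooth n (fs j))}"
  have "cinf_op k G fs \<in> ?X" using assms by blast
  then show ?thesis
  proof (rule smooth_coinduct_set)
    fix F assume "F \<in> ?X"
    then obtain k G fs where G: "smooth k G" and fs: "\<forall>j<k. smooth n (fs j)" and F: "F = cinf_op k G fs"
      by blast
    define V where "V x = (\<lambda>j. if j < k then fs j x else 0)" for x
    have FV: "F x = G (V x)" for x unfolding F cinf_op_def V_def by simp
    have dep: "F x = F (trunc n x)" for x
    proof -
      have "V x = V (trunc n x)" unfolding V_def using fs smooth_dep by (auto simp: fun_eq_iff)
      then show ?thesis using FV by simp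
    qed
    have Vc: "continuous_on UNIV V"
    proof (rule continuous_on_coordinatewise_then_product)
      fix j show "continuous_on UNIV (\<lambda>x. V x j)"
        unfolding V_def using fs smooth_cont by (cases "j < k") (auto simp add: continuous_on_const)
    qed
    have cont: "continuous_on UNIV F"
      unfolding FV[abs_def] using continuous_on_compose2[OF smooth_cont[OF G] Vc] by simp
    have der: "\<exists>f'. (f' \<in> ?X \<or> smooth n f') \<and> hasp i F f'" if i: "i < n" for i
    proof -
      define G' where "G' w = (\<Sum>j<k. pder k j G w * w (k + j))" for w
      define fs2 where "fs2 j = (if j < k then fs j else pder n i (fs (j - k)))" for j
      have G's: "smooth (2*k) G'"
        unfolding G'_def
        by (intro smooth_sum smooth_mult smooth_coord smooth_mono[OF pder(1)[OF G]]) auto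
      have fs2s: "\<forall>j<2*k. smooth n (fs2 j)"
        unfolding fs2_def using fs pder(1)[OF _ i] by auto
      have inX: "cinf_op (2*k) G' fs2 \<in> ?X" using G's fs2s by blast
      have "((\<lambda>t. F (x(i := t))) has_real_derivative cinf_op (2*k) G' fs2 x) (at (x i))" for x
      proof -
        define \<gamma> where "\<gamma> t = V (x(i := t))" for t
        have gc: "continuous_on UNIV \<gamma>"
          unfolding \<gamma>_def using continuous_on_compose2[OF Vc cont_upd[of x i]] by simp
        then have gc': "isCont \<gamma> (x i)" by (simp add: continuous_on_eq_continuous_at)
        have gd: "\<forall>j<k. ((\<lambda>t. \<gamma> t j) has_real_derivative pder n i (fs j) x) (at (x i))"
        proof (intro allI impI)
          fix j assume "j < k"
          then have "hasp i (fs j) (pder n i (fs j))" using pder(2)[OF _ i] fs by blast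
          then show "((\<lambda>t. \<gamma> t j) has_real_derivative pder n i (fs j) x) (at (x i))"
            unfolding hasp_def \<gamma>_def V_def using \<open>j < k\<close> by simp
        qed
        have "((\<lambda>t. G (\<gamma> t)) has_real_derivative (\<Sum>j<k. pder k j G (\<gamma> (x i)) * pder n i (fs j) x)) (at (x i))"
          by (rule chain_rule[OF G gc' gd])
        moreover have "\<gamma> (x i) = V x" unfolding \<gamma>_def by simp
        moreover have "cinf_op (2*k) G' fs2 x = (\<Sum>j<k. pder k j G (V x) * pder n i (fs j) x)"
        proof -
          let ?w = "\<lambda>j. if j < 2*k then fs2 j x else 0"
          have "pder k j G ?w = pder k j G (V x)" if "j < k" for j
          proof -
            have ps: "smooth k (pder k j G)" using pder(1)[OF G that] .
            have "trunc k ?w = trunc k (V x)" by (auto simp: trunc_def V_def fs2_def)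
            then show ?thesis using smooth_dep[OF ps, of ?w] smooth_dep[OF ps, of "V x"] by simp
          qed
          moreover have "?w (k + j) = pder n i (fs j) x" if "j < k" for j
            using that by (simp add: fs2_def)
          ultimately show ?thesis unfolding cinf_op_def G'_def by simp
        qed
        ultimately show ?thesis unfolding \<gamma>_def FV by simp
      qed
      then have "hasp i F (cinf_op (2*k) G' fs2)" unfolding hasp_def by blast
      then show ?thesis using inX by blast
    qed
    show "(\<forall>x. F x = F (trunc n x)) \<and> continuous_on UNIV F \<and>
          (\<forall>i<n. \<exists>f'. (f' \<in> ?X \<or> smooth n f') \<and> hasp i F f')"
      using dep cont der by blast
  qed
qed

definition pint :: "nat \<Rightarrow> fn \<Rightarrow> fn" where
  "pint n F = (\<lambda>x. integral {0..1} (\<lambda>s. F ((trunc n x)(n := s))))"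

lemma cont_inner1: "continuous_on UNIV (\<lambda>p::(nat\<Rightarrow>real)\<times>real. (trunc n (fst p))(n := snd p))"
proof (rule continuous_on_coordinatewise_then_product)
  fix l
  have c1: "continuous_on UNIV (\<lambda>p::(nat\<Rightarrow>real)\<times>real. fst p l)"
    by (rule cont_coord) (intro continuous_intros)
  show "continuous_on UNIV (\<lambda>p::(nat\<Rightarrow>real)\<times>real. ((trunc n (fst p))(n := snd p)) l)"
    by (cases "l = n"; cases "l < n") (simp_all add: trunc_def c1 continuous_on_snd continuous_on_id continuous_on_const)
qed

lemma cont_inner2: "continuous_on UNIV (\<lambda>p::real\<times>real. (trunc n (x(i := fst p)))(n := snd p))"
proof -
  have "continuous_on UNIV (\<lambda>p::real\<times>real. (x(i := fst p), snd p))"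
    using continuous_on_compose2[OF cont_upd[of x i] continuous_on_fst[OF continuous_on_id]]
    by (intro continuous_on_Pair) (auto intro: continuous_on_snd continuous_on_id)
  from continuous_on_compose2[OF cont_inner1[of n] this] show ?thesis by simp
qed

lemma smooth_pint:
  assumes "smooth (Suc n) F"
  shows "smooth n (pint n F)"
proof -
  let ?X = "{pint n F | F. smooth (Suc n) F}"
  have "pint n F \<in> ?X" using assms by blast
  then show ?thesis
  proof (rule smooth_coinduct_set)
    fix P assume "P \<in> ?X"
    then obtain F where F: "smooth (Suc n) F" and P: "P = pint n F" by blast
    have dep: "P x = P (trunc n x)" for x unfolding P pint_def by simp
    have cont: "continuous_on UNIV P"
    proof -
      have "continuous_on UNIV (\<lambda>p. F ((trunc n (fst p))(n := snd p)))"
        using continuous_on_compose2[OF smooth_cont[OF F] cont_inner1[of n]] by simp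
      then have "continuous_on (UNIV \<times> cbox 0 1) (\<lambda>(x, s). F ((trunc n x)(n := s)))"
        by (auto intro: continuous_on_subset simp: case_prod_beta)
      from integral_continuous_on_param[OF this] show ?thesis unfolding P pint_def by simp
    qed
    have der: "\<exists>f'. (f' \<in> ?X \<or> smooth n f') \<and> hasp i P f'" if i: "i < n" for i
    proof -
      have F's: "smooth (Suc n) (pder (Suc n) i F)" and F'h: "hasp i F (pder (Suc n) i F)"
        using pder[OF F] i by auto
      have "((\<lambda>t. P (x(i := t))) has_real_derivative pint n (pder (Suc n) i F) x) (at (x i))" for x
      proof -
        define f where "f t s = F ((trunc n (x(i := t)))(n := s))" for t s
        define fx where "fx t s = pder (Suc n) i F ((trunc n (x(i := t)))(n := s))" for t s
        have upd: "(trunc n (x(i := t')))(n := s) = ((trunc n (x(i := t)))(n := s))(i := t')" for t t' s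
          using i by (auto simp: trunc_def fun_eq_iff)
        have fd: "((\<lambda>t. f t s) has_field_derivative fx t s) (at t within UNIV)" for t s
        proof -
          have "((\<lambda>t'. F (((trunc n (x(i := t)))(n := s))(i := t'))) has_real_derivative
                 pder (Suc n) i F ((trunc n (x(i := t)))(n := s))) (at (((trunc n (x(i := t)))(n := s)) i))"
            using F'h unfolding hasp_def by blast
          moreover have "((trunc n (x(i := t)))(n := s)) i = t" using i by (simp add: trunc_def)
          ultimately have D: "((\<lambda>t'. F (((trunc n (x(i := t)))(n := s))(i := t'))) has_real_derivative fx t s) (at t)"
            unfolding fx_def by simp
          have eq: "f t' s = F (((trunc n (x(i := t)))(n := s))(i := t'))" for t'
            unfolding f_def using upd[where t=t and t'=t' and s=s] by simp
          show ?thesis using D unfolding eq by simp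
        qed
        have fc: "continuous_on UNIV (\<lambda>p::real\<times>real. f (fst p) (snd p))"
          unfolding f_def using continuous_on_compose2[OF smooth_cont[OF F] cont_inner2[of n x i]] by simp
        have fxc: "continuous_on UNIV (\<lambda>p::real\<times>real. fx (fst p) (snd p))"
          unfolding fx_def using continuous_on_compose2[OF smooth_cont[OF F's] cont_inner2[of n x i]] by simp
        have int: "f t integrable_on cbox 0 1" for t
        proof -
          have "continuous_on UNIV (\<lambda>s. f t s)"
            using continuous_on_compose2[OF fc continuous_on_Pair[OF continuous_on_const continuous_on_id]]
            by simp
          then show ?thesis by (auto intro: integrable_continuous_interval continuous_on_subset)
        qed
        have fxc2: "continuous_on (UNIV \<times> cbox 0 1) (\<lambda>(t, s). fx t s)"
          using fxc by (auto intro: continuous_on_subset simp: case_prod_beta)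
        have "((\<lambda>t. integral (cbox 0 1) (f t)) has_field_derivative integral (cbox 0 1) (fx (x i))) (at (x i) within UNIV)"
          by (rule leibniz_rule_field_derivative[OF fd int fxc2]) auto
        moreover have "fx (x i) = (\<lambda>s. pder (Suc n) i F ((trunc n x)(n := s)))"
          unfolding fx_def by simp
        moreover have "P (x(i := t)) = integral (cbox 0 1) (f t)" for t
          unfolding P pint_def f_def by simp
        ultimately show ?thesis unfolding pint_def by simp
      qed
      then have "hasp i P (pint n (pder (Suc n) i F))" unfolding hasp_def by blast
      then show ?thesis using F's by blast
    qed
    show "(\<forall>x. P x = P (trunc n x)) \<and> continuous_on UNIV P \<and>
          (\<forall>i<n. \<exists>f'. (f' \<in> ?X \<or> smooth n f') \<and> hasp i P f')"
      using dep cont der by blast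
  qed
qed

definition Hs :: "nat \<Rightarrow> fn \<Rightarrow> nat \<Rightarrow> fn" where
  "Hs k G j = (\<lambda>z. Hd k G j (trunc k z) (\<lambda>l. if l < k then z (k + l) else 0))"

lemma smooth_Hs:
  assumes G: "smooth k G" and j: "j < k"
  shows "smooth (2*k) (Hs k G j)"
proof -
  define comps where "comps l = (\<lambda>w::nat\<Rightarrow>real. if l = j then w (k + j) + w (2*k) * (w j - w (k + j))
      else if l < j then w l else w (k + l))" for l
  have cs: "smooth (Suc (2*k)) (comps l)" if "l < k" for l
    unfolding comps_def using that j
    by (cases "l = j"; cases "l < j") (auto intro!: smooth_add smooth_mult smooth_diff smooth_coord)
  have Fs: "smooth (Suc (2*k)) (cinf_op k (pder k j G) comps)"
    by (rule smooth_cinf_op[OF pder(1)[OF G j]]) (use cs in blast)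
  have "Hs k G j = pint (2*k) (cinf_op k (pder k j G) comps)"
  proof
    fix z
    have "(\<lambda>l. if l < k then comps l ((trunc (2*k) z)(2*k := s)) else 0) =
          (mid j (trunc k z) (\<lambda>l. if l < k then z (k + l) else 0))(j := (if j < k then z (k + j) else 0) + s * (trunc k z j - (if j < k then z (k + j) else 0)))" for s
      using j by (auto simp: fun_eq_iff comps_def mid_def trunc_def)
    then show "Hs k G j z = pint (2*k) (cinf_op k (pder k j G) comps) z"
      unfolding Hs_def Hd_def pint_def cinf_op_def by simp
  qed
  with smooth_pint[OF Fs] show ?thesis by simp
qed

lemma hadamard_Hs:
  assumes G: "smooth k G"
  shows "G (trunc k u) - G (trunc k v) = (\<Sum>j<k. Hs k G j (\<lambda>l. if l < k then u l else if l < 2*k then v (l - k) else 0) * (u j - v j))"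
proof -
  have "G (trunc k u) - G (trunc k v) = (\<Sum>j<k. Hd k G j (trunc k u) (trunc k v) * (trunc k u j - trunc k v j))"
    by (rule hadamard_identity[OF G])
  also have "\<dots> = (\<Sum>j<k. Hs k G j (\<lambda>l. if l < k then u l else if l < 2*k then v (l - k) else 0) * (u j - v j))"
  proof (rule sum.cong[OF refl])
    fix j assume "j \<in> {..<k}"
    then have j: "j < k" by simp
    have "trunc k (\<lambda>l. if l < k then u l else if l < 2*k then v (l - k) else 0) = trunc k u"
      by (auto simp: trunc_def)
    moreover have "(\<lambda>l. if l < k then (if k + l < k then u (k + l) else if k + l < 2*k then v (k + l - k) else 0) else 0) = trunc k v"
      by (auto simp: trunc_def fun_eq_iff)
    ultimately show "Hd k G j (trunc k u) (trunc k v) * (trunc k u j - trunc k v j) =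
        Hs k G j (\<lambda>l. if l < k then u l else if l < 2*k then v (l - k) else 0) * (u j - v j)"
      using j unfolding Hs_def by (simp add: trunc_def)
  qed
  finally show ?thesis .
qed

lemma Cinf_iff: "f \<in> Cinf n \<longleftrightarrow> smooth n f" by (simp add: Cinf_def)

lemma Cinf_const[simp,intro]: "(\<lambda>x. c) \<in> Cinf n" by (simp add: Cinf_def smooth_const)
lemma Cinf_coord[intro]: "j < n \<Longrightarrow> (\<lambda>x. x j) \<in> Cinf n" by (simp add: Cinf_def smooth_coord)
lemma Cinf_add[intro]: "f \<in> Cinf n \<Longrightarrow> g \<in> Cinf n \<Longrightarrow> (\<lambda>x. f x + g x) \<in> Cinf n"
  by (simp add: Cinf_def smooth_add)
lemma Cinf_mult[intro]: "f \<in> Cinf n \<Longrightarrow> g \<in> Cinf n \<Longrightarrow> (\<lambda>x. f x * g x) \<in> Cinf n"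
  by (simp add: Cinf_def smooth_mult)
lemma Cinf_diff[intro]: "f \<in> Cinf n \<Longrightarrow> g \<in> Cinf n \<Longrightarrow> (\<lambda>x. f x - g x) \<in> Cinf n"
  by (simp add: Cinf_def smooth_diff)
lemma Cinf_sum[intro]: "(\<And>a. a \<in> A \<Longrightarrow> F a \<in> Cinf n) \<Longrightarrow> (\<lambda>x. \<Sum>a\<in>A. F a x) \<in> Cinf n"
  by (simp add: Cinf_def smooth_sum)
lemma Cinf_prod[intro]: "(\<And>a. a \<in> A \<Longrightarrow> F a \<in> Cinf n) \<Longrightarrow> (\<lambda>x. \<Prod>a\<in>A. F a x) \<in> Cinf n"
  by (simp add: Cinf_def smooth_prod)
lemma Cinf_mono: "f \<in> Cinf n \<Longrightarrow> n \<le> n' \<Longrightarrow> f \<in> Cinf n'"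
  by (auto simp: Cinf_def intro: smooth_mono)
lemma Cinf_op[intro]: "G \<in> Cinf k \<Longrightarrow> (\<And>j. j < k \<Longrightarrow> fs j \<in> Cinf n) \<Longrightarrow> cinf_op k G fs \<in> Cinf n"
  by (simp add: Cinf_def smooth_cinf_op)
lemma Cinf_dep: "f \<in> Cinf n \<Longrightarrow> f x = f (\<lambda>i. if i < n then x i else 0)"
  using smooth_dep[of n f x] by (simp add: Cinf_def trunc_def)

lemma cinf_op_coord: "f \<in> Cinf p \<Longrightarrow> cinf_op p f (\<lambda>q x. x q) = f"
  unfolding cinf_op_def by (auto simp: fun_eq_iff Cinf_dep[symmetric])

lemma ideal_sub: "is_ideal n I \<Longrightarrow> f \<in> I \<Longrightarrow> f \<in> Cinf n"
  by (auto simp: is_ideal_def)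
lemma ideal_0: "is_ideal n I \<Longrightarrow> (\<lambda>x. 0) \<in> I"
  by (auto simp: is_ideal_def)
lemma ideal_add: "is_ideal n I \<Longrightarrow> f \<in> I \<Longrightarrow> g \<in> I \<Longrightarrow> (\<lambda>x. f x + g x) \<in> I"
  by (auto simp: is_ideal_def)
lemma ideal_lmult: "is_ideal n I \<Longrightarrow> a \<in> Cinf n \<Longrightarrow> f \<in> I \<Longrightarrow> (\<lambda>x. a x * f x) \<in> I"
  by (auto simp: is_ideal_def)
lemma ideal_rmult: "is_ideal n I \<Longrightarrow> a \<in> Cinf n \<Longrightarrow> f \<in> I \<Longrightarrow> (\<lambda>x. f x * a x) \<in> I"
  using ideal_lmult[of n I a f] by (simp add: mult.commute)
lemma ideal_scale: "is_ideal n I \<Longrightarrow> f \<in> I \<Longrightarrow> (\<lambda>x. c * f x) \<in> I"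
  using ideal_lmult[of n I "\<lambda>x. c" f] by simp
lemma ideal_neg: "is_ideal n I \<Longrightarrow> f \<in> I \<Longrightarrow> (\<lambda>x. - f x) \<in> I"
  using ideal_scale[of n I f "-1"] by simp
lemma ideal_diff: "is_ideal n I \<Longrightarrow> f \<in> I \<Longrightarrow> g \<in> I \<Longrightarrow> (\<lambda>x. f x - g x) \<in> I"
  using ideal_add[of n I f "\<lambda>x. - g x"] ideal_neg[of n I g] by simp
lemma ideal_sum: "is_ideal n I \<Longrightarrow> (\<And>a. a \<in> A \<Longrightarrow> F a \<in> I) \<Longrightarrow> (\<lambda>x. \<Sum>a\<in>A. F a x) \<in> I"
proof (induction A rule: infinite_finite_induct)
  case (infinite A) then show ?case by (simp add: ideal_0)
next
  case empty then show ?case by (simp add: ideal_0)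
next
  case (insert a A) then show ?case using ideal_add[of n I "F a" "\<lambda>x. \<Sum>a\<in>A. F a x"] by simp
qed
lemma ideal_ext: "f \<in> I \<Longrightarrow> (\<And>x. g x = f x) \<Longrightarrow> g \<in> I"
proof -
  assume "f \<in> I" "\<And>x. g x = f x"
  then have "g = f" by (simp add: fun_eq_iff)
  with \<open>f \<in> I\<close> show ?thesis by simp
qed

lemma is_ideal_Cinf: "is_ideal n (Cinf n)"
  by (auto simp: is_ideal_def)

lemma ceq_refl: "is_ideal n I \<Longrightarrow> ceq I f f"
  by (simp add: ceq_def ideal_0)
lemma ceq_eq: "is_ideal n I \<Longrightarrow> (\<And>x. f x = g x) \<Longrightarrow> ceq I f g"
  by (simp add: ceq_def ideal_0)
lemma ceq_sym: "is_ideal n I \<Longrightarrow> ceq I f g \<Longrightarrow> ceq I g f"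
  unfolding ceq_def using ideal_neg[of n I "\<lambda>x. f x - g x"] by simp
lemma ceq_trans: "is_ideal n I \<Longrightarrow> ceq I f g \<Longrightarrow> ceq I g h \<Longrightarrow> ceq I f h"
  unfolding ceq_def using ideal_add[of n I "\<lambda>x. f x - g x" "\<lambda>x. g x - h x"] by simp
lemma ceq_add: "is_ideal n I \<Longrightarrow> ceq I f f' \<Longrightarrow> ceq I g g' \<Longrightarrow> ceq I (\<lambda>x. f x + g x) (\<lambda>x. f' x + g' x)"
  unfolding ceq_def using ideal_add[of n I "\<lambda>x. f x - f' x" "\<lambda>x. g x - g' x"] by (simp add: algebra_simps)
lemma ceq_sum: "is_ideal n I \<Longrightarrow> (\<And>a. a \<in> A \<Longrightarrow> ceq I (F a) (F' a)) \<Longrightarrow>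
    ceq I (\<lambda>x. \<Sum>a\<in>A. F a x) (\<lambda>x. \<Sum>a\<in>A. F' a x)"
  unfolding ceq_def using ideal_sum[of n I A "\<lambda>a x. F a x - F' a x"] by (simp add: sum_subtractf)
lemma ceq_lmult: "is_ideal n I \<Longrightarrow> a \<in> Cinf n \<Longrightarrow> ceq I f g \<Longrightarrow> ceq I (\<lambda>x. a x * f x) (\<lambda>x. a x * g x)"
  unfolding ceq_def using ideal_lmult[of n I a "\<lambda>x. f x - g x"] by (simp add: algebra_simps)
lemma ceq_mem: "is_ideal n I \<Longrightarrow> ceq I f g \<Longrightarrow> g \<in> I \<Longrightarrow> f \<in> I"
  unfolding ceq_def using ideal_add[of n I "\<lambda>x. f x - g x" g] by simp
lemma ceq_zero: "is_ideal n I \<Longrightarrow> f \<in> I \<Longrightarrow> ceq I f (\<lambda>x. 0)"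
  unfolding ceq_def by simp

lemma ideal_gen_ideal:
  assumes "S \<subseteq> Cinf n" shows "is_ideal n (ideal_gen n S)"
  unfolding is_ideal_def
proof (intro conjI ballI)
  show "ideal_gen n S \<subseteq> Cinf n" using assms is_ideal_Cinf unfolding ideal_gen_def by blast
  show "(\<lambda>x. 0) \<in> ideal_gen n S" unfolding ideal_gen_def using ideal_0 by blast
next
  fix f g assume "f \<in> ideal_gen n S" "g \<in> ideal_gen n S"
  then show "(\<lambda>x. f x + g x) \<in> ideal_gen n S" unfolding ideal_gen_def using ideal_add by blast
next
  fix a f assume "a \<in> Cinf n" "f \<in> ideal_gen n S"
  then show "(\<lambda>x. a x * f x) \<in> ideal_gen n S" unfolding ideal_gen_def using ideal_lmult by blast
qed

lemma ideal_gen_base: "f \<in> S \<Longrightarrow> f \<in> ideal_gen n S"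
  unfolding ideal_gen_def by auto

lemma ideal_gen_least: "is_ideal n I \<Longrightarrow> S \<subseteq> I \<Longrightarrow> ideal_gen n S \<subseteq> I"
  unfolding ideal_gen_def by auto

lemma ideal_gen_mono: "S \<subseteq> S' \<Longrightarrow> S' \<subseteq> Cinf n \<Longrightarrow> ideal_gen n S \<subseteq> ideal_gen n S'"
  by (meson ideal_gen_base ideal_gen_ideal ideal_gen_least subset_iff)

lemma subst_ideal:
  assumes I': "is_ideal q I'"
    and sm: "\<And>F. F \<in> Cinf p \<Longrightarrow> (\<lambda>z. F (\<sigma> z)) \<in> Cinf q"
    and gens: "\<And>F. F \<in> S \<Longrightarrow> (\<lambda>z. F (\<sigma> z)) \<in> I'"
    and F: "F \<in> ideal_gen p S" and SC: "S \<subseteq> Cinf p"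
  shows "(\<lambda>z. F (\<sigma> z)) \<in> I'"
proof -
  let ?P = "{F \<in> Cinf p. (\<lambda>z. F (\<sigma> z)) \<in> I'}"
  have "is_ideal p ?P"
    unfolding is_ideal_def
  proof (intro conjI ballI)
    show "?P \<subseteq> Cinf p" by auto
    show "(\<lambda>x. 0) \<in> ?P" using ideal_0[OF I'] by auto
  next
    fix f g assume "f \<in> ?P" "g \<in> ?P"
    then show "(\<lambda>x. f x + g x) \<in> ?P" using ideal_add[OF I'] by auto
  next
    fix a f assume "a \<in> Cinf p" "f \<in> ?P"
    then show "(\<lambda>x. a x * f x) \<in> ?P" using ideal_lmult[OF I' sm] by auto
  qed
  moreover have "S \<subseteq> ?P" using gens SC by blast
  ultimately have "ideal_gen p S \<subseteq> ?P" by (rule ideal_gen_least)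
  with F show ?thesis by auto
qed

lemma cong_cinf_op:
  assumes I: "is_ideal n I" and G: "G \<in> Cinf m"
    and PQ: "\<And>j. j < m \<Longrightarrow> P j \<in> Cinf n \<and> Q j \<in> Cinf n \<and> ceq I (P j) (Q j)"
  shows "ceq I (cinf_op m G P) (cinf_op m G Q)"
proof -
  define R where "R l = (if l < m then P l else Q (l - m))" for l
  have Rs: "R l \<in> Cinf n" if "l < 2*m" for l using PQ that unfolding R_def by auto
  have eq: "cinf_op m G P x - cinf_op m G Q x =
      (\<Sum>j<m. cinf_op (2*m) (Hs m G j) R x * (P j x - Q j x))" for x
  proof -
    let ?u = "\<lambda>j. if j < m then P j x else 0" and ?v = "\<lambda>j. if j < m then Q j x else 0"
    have "G (trunc m ?u) - G (trunc m ?v) = (\<Sum>j<m. Hs m G j (\<lambda>l. if l < m then ?u l else if l < 2*m then ?v (l - m) else 0) * (?u j - ?v j))"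
      by (rule hadamard_Hs) (use G in \<open>simp add: Cinf_def\<close>)
    moreover have "trunc m ?u = ?u" "trunc m ?v = ?v" by (auto simp: trunc_def)
    moreover have "(\<lambda>l. if l < m then ?u l else if l < 2*m then ?v (l - m) else 0) = (\<lambda>j. if j < 2*m then R j x else 0)"
      by (auto simp: R_def fun_eq_iff)
    ultimately show ?thesis unfolding cinf_op_def by simp
  qed
  have "(\<lambda>x. \<Sum>j<m. cinf_op (2*m) (Hs m G j) R x * (P j x - Q j x)) \<in> I"
  proof (rule ideal_sum[OF I])
    fix j assume "j \<in> {..<m}"
    then have j: "j < m" by simp
    have "cinf_op (2*m) (Hs m G j) R \<in> Cinf n"
      using smooth_Hs[of m G j] G j Rs by (auto simp: Cinf_def intro!: smooth_cinf_op)
    moreover have "(\<lambda>x. P j x - Q j x) \<in> I" using PQ[OF j] by (simp add: ceq_def)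
    ultimately show "(\<lambda>x. cinf_op (2*m) (Hs m G j) R x * (P j x - Q j x)) \<in> I"
      by (rule ideal_lmult[OF I])
  qed
  then show ?thesis unfolding ceq_def using eq by simp
qed

definition swp :: "nat \<Rightarrow> nat \<Rightarrow> nat \<Rightarrow> nat" where
  "swp a b i = (if i = a then b else if i = b then a else i)"

lemma sum_swp:
  assumes "a < n" "b < n"
  shows "(\<Sum>i<n. g (swp a b i)) = (\<Sum>i<n. (g i :: real))"
  by (rule sum.reindex_bij_witness[where i="swp a b" and j="swp a b"]) (use assms in \<open>auto simp: swp_def\<close>)

lemma elim_identity:
  fixes cb cc e :: "nat \<Rightarrow> real"
  assumes "cb D \<noteq> 0"
  shows "f - (\<Sum>i<D. (cc i - cc D * cb i / cb D) * e i) =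
         (f - (\<Sum>i<Suc D. cc i * e i)) + (cc D / cb D) * (\<Sum>i<Suc D. cb i * e i)"
proof -
  have 1: "(\<Sum>i<D. (cc i - cc D * cb i / cb D) * e i) = (\<Sum>i<D. cc i * e i) - (cc D / cb D) * (\<Sum>i<D. cb i * e i)"
    by (simp add: sum_distrib_left sum_subtractf[symmetric] left_diff_distrib mult.assoc)
  have 2: "(cc D / cb D) * (cb D * e D) = cc D * e D" using assms by simp
  show ?thesis unfolding 1 sum.lessThan_Suc using 2 by (simp add: distrib_left)
qed

lemma basis_exists:
  assumes J: "is_ideal k J" and fin: "finite B" and BC: "B \<subseteq> Cinf k"
    and sp: "\<forall>f\<in>Cinf k. \<exists>c::fn\<Rightarrow>real. ceq J f (\<lambda>x. \<Sum>b\<in>B. c b * b x)"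
  shows "\<exists>(d::nat) e. (\<forall>i<d. e i \<in> Cinf k) \<and> (\<forall>f\<in>Cinf k. \<exists>c. ceq J f (\<lambda>y. \<Sum>i<d. c i * e i y)) \<and>
     (\<forall>c. (\<lambda>y. \<Sum>i<d. c i * e i y) \<in> J \<longrightarrow> (\<forall>i<d. c i = 0))"
proof -
  define SP where "SP (d::nat) \<longleftrightarrow> (\<exists>e. (\<forall>i<d. e i \<in> Cinf k) \<and> (\<forall>f\<in>Cinf k. \<exists>c. ceq J f (\<lambda>y. \<Sum>i<d. c i * e i y)))" for d
  have "SP (card B)"
  proof -
    obtain h where h: "bij_betw h {0..<card B} B" using ex_bij_betw_nat_finite[OF fin] by blast
    have A: "\<forall>i<card B. h i \<in> Cinf k"
    proof (intro allI impI)
      fix i assume "i < card B"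
      then have "h i \<in> B" using bij_betw_apply[OF h, of i] by simp
      then show "h i \<in> Cinf k" using BC by blast
    qed
    have B: "\<forall>f\<in>Cinf k. \<exists>c. ceq J f (\<lambda>y. \<Sum>i<card B. c i * h i y)"
    proof
      fix f assume "f \<in> Cinf k"
      then obtain c where c: "ceq J f (\<lambda>x. \<Sum>b\<in>B. c b * b x)" using sp by blast
      have "(\<Sum>i\<in>{0..<card B}. c (h i) * h i x) = (\<Sum>b\<in>B. c b * b x)" for x
        by (rule sum.reindex_bij_betw[OF h])
      then have "(\<lambda>x. \<Sum>b\<in>B. c b * b x) = (\<lambda>y. \<Sum>i<card B. c (h i) * h i y)"
        by (simp only: atLeast0LessThan)
      then have "ceq J f (\<lambda>y. \<Sum>i<card B. c (h i) * h i y)" using c by (simp only:)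
      then show "\<exists>c. ceq J f (\<lambda>y. \<Sum>i<card B. c i * h i y)" by (rule exI[of _ "\<lambda>i. c (h i)"])
    qed
    show ?thesis unfolding SP_def by (rule exI[of _ h]) (use A B in \<open>rule conjI\<close>)
  qed
  define d0 where "d0 = (LEAST d. SP d)"
  have SPd0: "SP d0" unfolding d0_def by (rule LeastI[where P=SP, OF \<open>SP (card B)\<close>])
  have min: "\<not> SP d" if "d < d0" for d using that unfolding d0_def by (rule not_less_Least)
  obtain e where eC: "\<forall>i<d0. e i \<in> Cinf k" and esp: "\<forall>f\<in>Cinf k. \<exists>c. ceq J f (\<lambda>y. \<Sum>i<d0. c i * e i y)"
    using SPd0 unfolding SP_def by (elim exE conjE)
  have indep: "\<forall>c. (\<lambda>y. \<Sum>i<d0. c i * e i y) \<in> J \<longrightarrow> (\<forall>i<d0. c i = 0)"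
  proof (rule ccontr)
    assume "\<not> ?thesis"
    then obtain c i0 where cJ: "(\<lambda>y. \<Sum>i<d0. c i * e i y) \<in> J" and i0: "i0 < d0" and ci0: "c i0 \<noteq> 0"
      by blast
    obtain D where D: "d0 = Suc D" using i0 by (cases d0) auto
    define \<tau> where "\<tau> = swp i0 D"
    define e2 where "e2 i = e (\<tau> i)" for i
    define c2 where "c2 i = c (\<tau> i)" for i
    have sw: "(\<Sum>i<d0. g (\<tau> i)) = (\<Sum>i<d0. g i)" for g :: "nat \<Rightarrow> real"
      unfolding \<tau>_def by (rule sum_swp) (use i0 D in auto)
    have \<tau>lt: "\<tau> i < d0" if "i < d0" for i using that i0 D by (auto simp: \<tau>_def swp_def)
    have "(\<Sum>i<Suc D. c2 i * e2 i y) = (\<Sum>i<d0. c i * e i y)" for y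
      using sw[of "\<lambda>i. c i * e i y"] unfolding c2_def e2_def D[symmetric] by simp
    then have c2J: "(\<lambda>y. \<Sum>i<Suc D. c2 i * e2 i y) \<in> J"
      using cJ by simp
    have c2D: "c2 D \<noteq> 0" using ci0 by (simp add: c2_def \<tau>_def swp_def)
    have "SP D"
      unfolding SP_def
    proof (rule exI[of _ e2], intro conjI ballI allI impI)
      fix i assume "i < D" then show "e2 i \<in> Cinf k" unfolding e2_def using eC \<tau>lt D by simp
    next
      fix f assume f: "f \<in> Cinf k"
      obtain c' where c': "ceq J f (\<lambda>y. \<Sum>i<d0. c' i * e i y)" using esp f by blast
      define c3 where "c3 i = c' (\<tau> i)" for i
      have "(\<Sum>i<Suc D. c3 i * e2 i y) = (\<Sum>i<d0. c' i * e i y)" for y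
        using sw[of "\<lambda>i. c' i * e i y"] unfolding c3_def e2_def D[symmetric] by simp
      then have c3: "ceq J f (\<lambda>y. \<Sum>i<Suc D. c3 i * e2 i y)"
        using c' by simp
      define c'' where "c'' i = c3 i - c3 D * c2 i / c2 D" for i
      have eq: "f y - (\<Sum>i<D. c'' i * e2 i y) =
          (f y - (\<Sum>i<Suc D. c3 i * e2 i y)) + (c3 D / c2 D) * (\<Sum>i<Suc D. c2 i * e2 i y)" for y
        unfolding c''_def using elim_identity[where cb=c2 and D=D and cc=c3 and e="\<lambda>i. e2 i y" and f="f y", OF c2D] by simp
      have "(\<lambda>y. (f y - (\<Sum>i<Suc D. c3 i * e2 i y)) + (c3 D / c2 D) * (\<Sum>i<Suc D. c2 i * e2 i y)) \<in> J"
        using ideal_add[OF J c3[unfolded ceq_def] ideal_scale[OF J c2J]] .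
      moreover have "(\<lambda>y. f y - (\<Sum>i<D. c'' i * e2 i y)) = (\<lambda>y. (f y - (\<Sum>i<Suc D. c3 i * e2 i y)) + (c3 D / c2 D) * (\<Sum>i<Suc D. c2 i * e2 i y))"
        by (rule ext, rule eq)
      ultimately have "ceq J f (\<lambda>y. \<Sum>i<D. c'' i * e2 i y)" unfolding ceq_def by (simp only:)
      then show "\<exists>c. ceq J f (\<lambda>y. \<Sum>i<D. c i * e2 i y)" by (rule exI[of _ c''])
    qed
    then show False using min D by simp
  qed
  show ?thesis
    apply (rule exI[of _ d0])
    apply (rule exI[of _ e])
    using eC esp indep by (intro conjI)
qed

locale wsetup =
  fixes k :: nat and J :: "fn set" and d :: nat and e :: "nat \<Rightarrow> fn" and M :: "fn set"
    and N :: nat and a :: "nat \<Rightarrow> real"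
  assumes J: "is_ideal k J"
    and eC: "\<And>i. i < d \<Longrightarrow> e i \<in> Cinf k"
    and span: "\<And>f. f \<in> Cinf k \<Longrightarrow> \<exists>c. ceq J f (\<lambda>y. \<Sum>i<d. c i * e i y)"
    and indep: "\<And>c i. (\<lambda>y. \<Sum>i<d. c i * e i y) \<in> J \<Longrightarrow> i < d \<Longrightarrow> c i = 0"
    and M: "is_ideal k M"
    and pow: "\<And>fs. (\<And>j. j < N \<Longrightarrow> fs j \<in> M) \<Longrightarrow> (\<lambda>x. \<Prod>j<N. fs j x) \<in> J"
    and aM: "\<And>l. l < k \<Longrightarrow> (\<lambda>y. y l - a l) \<in> M"

lemma wsetup_exists:
  assumes "local_artinian k J"
  shows "\<exists>d e M N a. wsetup k J d e M N a"
proof -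
  from assms obtain B M N where J: "is_ideal k J" and fin: "finite B" and BC: "B \<subseteq> Cinf k"
    and sp: "\<forall>f\<in>Cinf k. \<exists>c :: fn \<Rightarrow> real. ceq J f (\<lambda>x. \<Sum>b\<in>B. c b * b x)"
    and M: "is_ideal k M" and res: "\<forall>f\<in>Cinf k. \<exists>c::real. ceq M f (\<lambda>x. c)"
    and pow: "\<forall>fs :: nat \<Rightarrow> fn. (\<forall>j<N. fs j \<in> M) \<longrightarrow> (\<lambda>x. \<Prod>j<N. fs j x) \<in> J"
    unfolding local_artinian_def by blast
  define GB where "GB d e \<longleftrightarrow> (\<forall>i<d. e i \<in> Cinf k) \<and> (\<forall>f\<in>Cinf k. \<exists>c. ceq J f (\<lambda>y. \<Sum>i<d. c i * e i y)) \<and>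
     (\<forall>c. (\<lambda>y. \<Sum>i<d. c i * e i y) \<in> J \<longrightarrow> (\<forall>i<d. c i = 0))" for d :: nat and e
  have "\<exists>d e. GB d e" unfolding GB_def by (rule basis_exists[OF J fin BC sp])
  then obtain d e where H: "GB d e" by blast
  have eC: "\<forall>i<d. e i \<in> Cinf k" using H unfolding GB_def by (rule conjunct1)
  have esp: "\<forall>f\<in>Cinf k. \<exists>c. ceq J f (\<lambda>y. \<Sum>i<d. c i * e i y)" using H unfolding GB_def by (elim conjE)
  have ind: "\<forall>c. (\<lambda>y. \<Sum>i<d. c i * e i y) \<in> J \<longrightarrow> (\<forall>i<d. c i = 0)" using H unfolding GB_def by (elim conjE)
  define a where "a l = (SOME c. ceq M (\<lambda>y. y l) (\<lambda>y. c))" for l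
  have aM: "(\<lambda>y. y l - a l) \<in> M" if "l < k" for l
  proof -
    have "\<exists>c. ceq M (\<lambda>y. y l) (\<lambda>y. c)" using res Cinf_coord[OF that] by blast
    then have "ceq M (\<lambda>y. y l) (\<lambda>y. a l)" unfolding a_def by (rule someI_ex)
    then show ?thesis by (simp add: ceq_def)
  qed
  have "wsetup k J d e M N a"
    apply unfold_locales
    subgoal by (rule J)
    subgoal using eC by simp
    subgoal using esp by simp
    subgoal for c i using ind by simp
    subgoal by (rule M)
    subgoal for fs using pow by simp
    subgoal for l using aM by simp
    done
  then show ?thesis by blast
qed

context wsetup
begin

definition coefW :: "fn \<Rightarrow> nat \<Rightarrow> real" where
  "coefW f = (SOME c. ceq J f (\<lambda>y. \<Sum>i<d. c i * e i y))"

lemma coefW_spec: assumes "f \<in> Cinf k" shows "ceq J f (\<lambda>y. \<Sum>i<d. coefW f i * e i y)"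
  unfolding coefW_def using someI_ex[OF span[OF assms]] .

lemma sumC: "(\<lambda>y. \<Sum>i<d. c i * e i y) \<in> Cinf k"
  using eC by (intro Cinf_sum Cinf_mult Cinf_const) auto

lemma coefW_unique:
  assumes f: "f \<in> Cinf k" and c: "ceq J f (\<lambda>y. \<Sum>i<d. c i * e i y)" and i: "i < d"
  shows "coefW f i = c i"
proof -
  have "ceq J (\<lambda>y. \<Sum>i<d. coefW f i * e i y) (\<lambda>y. \<Sum>i<d. c i * e i y)"
    by (rule ceq_trans[OF J ceq_sym[OF J coefW_spec[OF f]] c])
  then have "(\<lambda>y. (\<Sum>i<d. coefW f i * e i y) - (\<Sum>i<d. c i * e i y)) \<in> J" by (simp add: ceq_def)
  moreover have "(\<lambda>y. (\<Sum>i<d. coefW f i * e i y) - (\<Sum>i<d. c i * e i y)) = (\<lambda>y. \<Sum>i<d. (coefW f i - c i) * e i y)"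
    by (simp add: sum_subtractf left_diff_distrib)
  ultimately have "(\<lambda>y. \<Sum>i<d. (coefW f i - c i) * e i y) \<in> J" by simp
  from indep[OF this i] show ?thesis by simp
qed

lemma coefW_add:
  assumes "f \<in> Cinf k" "g \<in> Cinf k" "i < d"
  shows "coefW (\<lambda>y. f y + g y) i = coefW f i + coefW g i"
proof -
  have "ceq J (\<lambda>y. f y + g y) (\<lambda>y. (\<Sum>i<d. coefW f i * e i y) + (\<Sum>i<d. coefW g i * e i y))"
    by (rule ceq_add[OF J coefW_spec coefW_spec]) (use assms in auto)
  moreover have "(\<lambda>y. (\<Sum>i<d. coefW f i * e i y) + (\<Sum>i<d. coefW g i * e i y)) = (\<lambda>y. \<Sum>i<d. (coefW f i + coefW g i) * e i y)"
    by (simp add: sum.distrib distrib_right)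
  ultimately have "ceq J (\<lambda>y. f y + g y) (\<lambda>y. \<Sum>i<d. (coefW f i + coefW g i) * e i y)" by simp
  from coefW_unique[OF _ this assms(3)] show ?thesis using assms by auto
qed

lemma coefW_scale:
  assumes "f \<in> Cinf k" "i < d"
  shows "coefW (\<lambda>y. r * f y) i = r * coefW f i"
proof -
  have "ceq J (\<lambda>y. r * f y) (\<lambda>y. r * (\<Sum>i<d. coefW f i * e i y))"
    by (rule ceq_lmult[OF J Cinf_const coefW_spec[OF assms(1)]])
  moreover have "(\<lambda>y. r * (\<Sum>i<d. coefW f i * e i y)) = (\<lambda>y. \<Sum>i<d. (r * coefW f i) * e i y)"
    by (simp add: sum_distrib_left mult.assoc)
  ultimately have "ceq J (\<lambda>y. r * f y) (\<lambda>y. \<Sum>i<d. (r * coefW f i) * e i y)" by simp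
  from coefW_unique[OF Cinf_mult[OF Cinf_const assms(1)] this assms(2)] show ?thesis by simp
qed

lemma coefW_diff:
  assumes f: "f \<in> Cinf k" and g: "g \<in> Cinf k" and i: "i < d"
  shows "coefW (\<lambda>y. f y - g y) i = coefW f i - coefW g i"
proof -
  have "(\<lambda>y. (f y - (\<Sum>i<d. coefW f i * e i y)) - (g y - (\<Sum>i<d. coefW g i * e i y))) \<in> J"
    using ideal_diff[OF J coefW_spec[OF f, unfolded ceq_def] coefW_spec[OF g, unfolded ceq_def]] .
  moreover have "(\<lambda>y. (f y - (\<Sum>i<d. coefW f i * e i y)) - (g y - (\<Sum>i<d. coefW g i * e i y))) =
      (\<lambda>y. (f y - g y) - (\<Sum>i<d. (coefW f i - coefW g i) * e i y))"
  proof (rule ext)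
    fix y
    have "(\<Sum>i<d. (coefW f i - coefW g i) * e i y) = (\<Sum>i<d. coefW f i * e i y) - (\<Sum>i<d. coefW g i * e i y)"
      by (simp add: sum_subtractf left_diff_distrib)
    then show "(f y - (\<Sum>i<d. coefW f i * e i y)) - (g y - (\<Sum>i<d. coefW g i * e i y)) =
      (f y - g y) - (\<Sum>i<d. (coefW f i - coefW g i) * e i y)" by linarith
  qed
  ultimately have "ceq J (\<lambda>y. f y - g y) (\<lambda>y. \<Sum>i<d. (coefW f i - coefW g i) * e i y)"
    unfolding ceq_def by simp
  from coefW_unique[OF Cinf_diff[OF f g] this i] show ?thesis .
qed

lemma coefW_J:
  assumes "f \<in> J" "i < d"
  shows "coefW f i = 0"
proof -
  have "ceq J f (\<lambda>y. \<Sum>i<d. 0 * e i y)" using ceq_zero[OF J assms(1)] by simp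
  from coefW_unique[OF ideal_sub[OF J assms(1)] this assms(2)] show ?thesis .
qed

lemma coefW_ceq:
  assumes "f \<in> Cinf k" "g \<in> Cinf k" "ceq J f g" "i < d"
  shows "coefW f i = coefW g i"
  using coefW_unique[OF assms(1) ceq_trans[OF J assms(3) coefW_spec[OF assms(2)]] assms(4)] .

lemma coefW_sum_e:
  assumes "i < d"
  shows "coefW (\<lambda>y. \<Sum>i<d. c i * e i y) i = c i"
  by (rule coefW_unique[OF sumC ceq_refl[OF J] assms])

lemma coefW_sum:
  assumes "finite A" "\<And>b. b \<in> A \<Longrightarrow> F b \<in> Cinf k" "i < d"
  shows "coefW (\<lambda>y. \<Sum>b\<in>A. F b y) i = (\<Sum>b\<in>A. coefW (F b) i)"
  using assms
proof (induction A rule: finite_induct)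
  case empty
  then show ?case using coefW_J[OF ideal_0[OF J] assms(3)] by simp
next
  case (insert b A)
  have "coefW (\<lambda>y. \<Sum>b\<in>insert b A. F b y) i = coefW (\<lambda>y. F b y + (\<Sum>b\<in>A. F b y)) i"
    using insert.hyps by simp
  also have "\<dots> = coefW (F b) i + coefW (\<lambda>y. \<Sum>b\<in>A. F b y) i"
    using coefW_add[of "F b" "\<lambda>y. \<Sum>b\<in>A. F b y" i] insert.prems assms(3) by (auto intro!: Cinf_sum)
  also have "\<dots> = (\<Sum>b\<in>insert b A. coefW (F b) i)" using insert by simp
  finally show ?case .
qed

end

lemma sum_split_add: "(\<Sum>j<n+k. f j) = (\<Sum>j<n. f j) + (\<Sum>l<k. f (n + l))" for f :: "nat \<Rightarrow> real"
  by (induction k) simp_all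

lemma shift_C: "g \<in> Cinf k \<Longrightarrow> shift_fun n g \<in> Cinf (n + k)"
proof -
  assume g: "g \<in> Cinf k"
  have "shift_fun n g = cinf_op k g (\<lambda>j z. z (n + j))"
    unfolding shift_fun_def cinf_op_def by (rule ext) (rule Cinf_dep[OF g])
  moreover have "cinf_op k g (\<lambda>j z. z (n + j)) \<in> Cinf (n + k)"
    by (rule Cinf_op[OF g]) auto
  ultimately show ?thesis by simp
qed

context wsetup
begin

definition sl :: "nat \<Rightarrow> (nat \<Rightarrow> real) \<Rightarrow> fn \<Rightarrow> fn" where
  "sl n x F = (\<lambda>y. F (\<lambda>l. if l < n then x l else if l < n + k then y (l - n) else 0))"

lemma sl_C: assumes F: "F \<in> Cinf (n + k)" shows "sl n x F \<in> Cinf k"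
proof -
  have "sl n x F = cinf_op (n + k) F (\<lambda>l. if l < n then (\<lambda>y. x l) else (\<lambda>y. y (l - n)))"
    unfolding sl_def cinf_op_def by (rule ext) (rule arg_cong[where f=F], auto)
  moreover have "cinf_op (n + k) F (\<lambda>l. if l < n then (\<lambda>y. x l) else (\<lambda>y. y (l - n))) \<in> Cinf k"
    by (rule Cinf_op[OF F]) auto
  ultimately show ?thesis by simp
qed

lemma sl_shift: assumes g: "g \<in> Cinf k" shows "sl n x (shift_fun n g) = g"
proof
  fix y
  have "(\<lambda>j. (if n + j < n then x (n + j) else if n + j < n + k then y (n + j - n) else 0)) = (\<lambda>j. if j < k then y j else 0)"
    by auto
  then show "sl n x (shift_fun n g) y = g y"
    unfolding sl_def shift_fun_def using Cinf_dep[OF g, of y] by simp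
qed

lemma sl_Cn: assumes C: "C \<in> Cinf n" shows "sl n x C = (\<lambda>y. C x)"
proof
  fix y
  have "(\<lambda>i. if i < n then (if i < n then x i else if i < n + k then y (i - n) else 0) else 0) = (\<lambda>i. if i < n then x i else 0)"
    by auto
  then show "sl n x C y = C x"
    unfolding sl_def using Cinf_dep[OF C, of x] Cinf_dep[OF C, of "\<lambda>l. if l < n then x l else if l < n + k then y (l - n) else 0"]
    by simp
qed

definition T0 :: "nat \<Rightarrow> fn set" where
  "T0 n = ideal_gen (n + k) {shift_fun n g | g. g \<in> J}"

lemma T0_gens_C: "{shift_fun n g | g. g \<in> J} \<subseteq> Cinf (n + k)"
  using shift_C ideal_sub[OF J] by blast

lemma T0_ideal: "is_ideal (n + k) (T0 n)"
  unfolding T0_def by (rule ideal_gen_ideal[OF T0_gens_C])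

lemma T0_gen: "g \<in> J \<Longrightarrow> shift_fun n g \<in> T0 n"
  unfolding T0_def by (rule ideal_gen_base) blast

lemma T0_sl: assumes G: "G \<in> T0 n" shows "sl n x G \<in> J"
proof -
  have "(\<lambda>y. G (\<lambda>l. if l < n then x l else if l < n + k then y (l - n) else 0)) \<in> J"
  proof (rule subst_ideal[OF J _ _ G[unfolded T0_def] T0_gens_C])
    fix F assume "F \<in> Cinf (n + k)"
    from sl_C[OF this, of x] show "(\<lambda>y. F (\<lambda>l. if l < n then x l else if l < n + k then y (l - n) else 0)) \<in> Cinf k"
      unfolding sl_def .
  next
    fix F assume "F \<in> {shift_fun n g | g. g \<in> J}"
    then obtain g where g: "g \<in> J" and F: "F = shift_fun n g" by blast
    have "sl n x F = g" unfolding F by (rule sl_shift[OF ideal_sub[OF J g]])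
    then show "(\<lambda>y. F (\<lambda>l. if l < n then x l else if l < n + k then y (l - n) else 0)) \<in> J"
      using g unfolding sl_def by simp
  qed
  then show ?thesis unfolding sl_def .
qed

definition cf :: "nat \<Rightarrow> nat \<Rightarrow> fn \<Rightarrow> fn" where
  "cf n i F = (\<lambda>x. coefW (sl n x F) i)"

lemma had_expand:
  assumes G: "G \<in> Cinf (n + k)"
  shows "\<exists>G0 H. G0 \<in> Cinf n \<and> (\<forall>l<k. H l \<in> Cinf (n + k)) \<and>
           (\<forall>z. G z = G0 z + (\<Sum>l<k. H l z * (z (n + l) - a l)))"
proof -
  define v where "v z = (\<lambda>j. if j < n then z j else if j < n + k then a (j - n) else 0)" for z
  define comps0 where "comps0 j = (if j < n then (\<lambda>z::nat\<Rightarrow>real. z j) else (\<lambda>z. a (j - n)))" for j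
  define G0 where "G0 = cinf_op (n + k) G comps0"
  have G0v: "G0 z = G (v z)" for z
    unfolding G0_def cinf_op_def v_def comps0_def by (rule arg_cong[where f=G]) auto
  have G0C: "G0 \<in> Cinf n" unfolding G0_def comps0_def by (rule Cinf_op[OF G]) auto
  define w where "w z = (\<lambda>l. if l < n + k then z l else if l < 2 * (n + k) then v z (l - (n + k)) else 0)" for z
  define compsW where "compsW j = (if j < n + k then (\<lambda>z::nat\<Rightarrow>real. z j) else
     if j - (n + k) < n then (\<lambda>z. z (j - (n + k))) else (\<lambda>z. a (j - (n + k) - n)))" for j
  define H where "H l = cinf_op (2 * (n + k)) (Hs (n + k) G (n + l)) compsW" for l
  have Hw: "H l z = Hs (n + k) G (n + l) (w z)" for l z
    unfolding H_def cinf_op_def w_def compsW_def v_def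
    by (rule arg_cong[where f="Hs (n + k) G (n + l)"]) (auto simp: fun_eq_iff)
  have HC: "\<forall>l<k. H l \<in> Cinf (n + k)"
  proof (intro allI impI)
    fix l assume l: "l < k"
    have "Hs (n + k) G (n + l) \<in> Cinf (2 * (n + k))"
      using smooth_Hs[of "n + k" G "n + l"] G l by (simp add: Cinf_def)
    then show "H l \<in> Cinf (n + k)" unfolding H_def compsW_def by (rule Cinf_op) auto
  qed
  have expand: "G z = G0 z + (\<Sum>l<k. H l z * (z (n + l) - a l))" for z
  proof -
    have Gs: "smooth (n + k) G" using G by (simp add: Cinf_def)
    have "G (trunc (n + k) z) - G (trunc (n + k) (v z)) =
        (\<Sum>j<n + k. Hs (n + k) G j (\<lambda>l. if l < n + k then z l else if l < 2 * (n + k) then v z (l - (n + k)) else 0) * (z j - v z j))"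
      by (rule hadamard_Hs[OF Gs])
    moreover have "G (trunc (n + k) z) = G z" using Cinf_dep[OF G, of z] by (simp add: trunc_def)
    moreover have "trunc (n + k) (v z) = v z" by (auto simp: trunc_def v_def)
    moreover have "(\<Sum>j<n + k. Hs (n + k) G j (w z) * (z j - v z j)) = (\<Sum>l<k. H l z * (z (n + l) - a l))"
    proof -
      have "(\<Sum>j<n + k. Hs (n + k) G j (w z) * (z j - v z j)) =
          (\<Sum>j<n. Hs (n + k) G j (w z) * (z j - v z j)) + (\<Sum>l<k. Hs (n + k) G (n + l) (w z) * (z (n + l) - v z (n + l)))"
        by (rule sum_split_add)
      moreover have "(\<Sum>j<n. Hs (n + k) G j (w z) * (z j - v z j)) = 0"
        by (rule sum.neutral) (auto simp: v_def)
      moreover have "(\<Sum>l<k. Hs (n + k) G (n + l) (w z) * (z (n + l) - v z (n + l))) = (\<Sum>l<k. H l z * (z (n + l) - a l))"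
        by (rule sum.cong[OF refl]) (auto simp: v_def Hw)
      ultimately show ?thesis by simp
    qed
    ultimately show ?thesis using G0v unfolding w_def by simp
  qed
  show ?thesis using G0C HC expand by blast
qed

end

context wsetup
begin

definition Vs :: "nat \<Rightarrow> fn set" where
  "Vs n = {F \<in> Cinf (n + k). \<exists>C. (\<forall>i<d. C i \<in> Cinf n) \<and> ceq (T0 n) F (\<lambda>z. \<Sum>i<d. C i z * shift_fun n (e i) z)}"

lemma Vs_ext: "F \<in> Vs n \<Longrightarrow> (\<And>z. G z = F z) \<Longrightarrow> G \<in> Vs n"
proof -
  assume "F \<in> Vs n" "\<And>z. G z = F z"
  then have "G = F" by (simp add: fun_eq_iff)
  with \<open>F \<in> Vs n\<close> show ?thesis by simp
qed

lemma Vs_zero: "(\<lambda>z. 0) \<in> Vs n"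
  unfolding Vs_def
  apply (rule CollectI, rule conjI[OF Cinf_const])
  apply (rule exI[of _ "\<lambda>i z. 0"])
  using ceq_refl[OF T0_ideal, of n "\<lambda>z. 0"] by simp

lemma Vs_add:
  assumes F: "F \<in> Vs n" and G: "G \<in> Vs n"
  shows "(\<lambda>z. F z + G z) \<in> Vs n"
proof -
  obtain C1 where FC: "F \<in> Cinf (n + k)" and C1: "\<forall>i<d. C1 i \<in> Cinf n"
    and c1: "ceq (T0 n) F (\<lambda>z. \<Sum>i<d. C1 i z * shift_fun n (e i) z)"
    using F unfolding Vs_def by blast
  obtain C2 where GC: "G \<in> Cinf (n + k)" and C2: "\<forall>i<d. C2 i \<in> Cinf n"
    and c2: "ceq (T0 n) G (\<lambda>z. \<Sum>i<d. C2 i z * shift_fun n (e i) z)"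
    using G unfolding Vs_def by blast
  have "ceq (T0 n) (\<lambda>z. F z + G z) (\<lambda>z. (\<Sum>i<d. C1 i z * shift_fun n (e i) z) + (\<Sum>i<d. C2 i z * shift_fun n (e i) z))"
    by (rule ceq_add[OF T0_ideal c1 c2])
  moreover have "(\<lambda>z. (\<Sum>i<d. C1 i z * shift_fun n (e i) z) + (\<Sum>i<d. C2 i z * shift_fun n (e i) z)) =
      (\<lambda>z. \<Sum>i<d. (\<lambda>z. C1 i z + C2 i z) z * shift_fun n (e i) z)"
    by (simp add: sum.distrib distrib_right)
  ultimately have "ceq (T0 n) (\<lambda>z. F z + G z) (\<lambda>z. \<Sum>i<d. (\<lambda>z. C1 i z + C2 i z) z * shift_fun n (e i) z)"
    by simp
  moreover have "\<forall>i<d. (\<lambda>z. C1 i z + C2 i z) \<in> Cinf n" using C1 C2 by auto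
  moreover have "(\<lambda>z. F z + G z) \<in> Cinf (n + k)" using FC GC by auto
  ultimately show ?thesis unfolding Vs_def
    by (intro CollectI conjI exI[of _ "\<lambda>i z. C1 i z + C2 i z"])
qed

lemma Vs_sum:
  assumes "finite A" "\<And>b. b \<in> A \<Longrightarrow> F b \<in> Vs n"
  shows "(\<lambda>z. \<Sum>b\<in>A. F b z) \<in> Vs n"
  using assms
proof (induction A rule: finite_induct)
  case empty then show ?case using Vs_zero by simp
next
  case (insert b A)
  have "(\<lambda>z. F b z + (\<lambda>z. \<Sum>b\<in>A. F b z) z) \<in> Vs n"
    using Vs_add[of "F b" n "\<lambda>z. \<Sum>b\<in>A. F b z"] insert by simp
  then show ?case by (rule Vs_ext) (use insert.hyps in simp)
qed

lemma Vs_all: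
  assumes G: "G \<in> Cinf (n + k)"
  shows "G \<in> Vs n"
proof -
  have key: "\<forall>fs. (\<forall>j<r. fs j \<in> M) \<longrightarrow> (\<forall>G\<in>Cinf (n + k). (\<lambda>z. (\<Prod>j<r. fs j (\<lambda>l. z (n + l))) * G z) \<in> Vs n)"
    if "r \<le> N" for r
    using that
  proof (induction r rule: inc_induct)
    case base
    show ?case
    proof (intro allI impI ballI)
      fix fs G assume fs: "\<forall>j<N. fs j \<in> M" and G: "G \<in> Cinf (n + k)"
      let ?p = "\<lambda>y. \<Prod>j<N. fs j y"
      have pJ: "?p \<in> J" using pow fs by blast
      have "shift_fun n ?p \<in> T0 n" by (rule T0_gen[OF pJ])
      then have inT: "(\<lambda>z. shift_fun n ?p z * G z) \<in> T0 n" by (rule ideal_rmult[OF T0_ideal G])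
      have pC: "?p \<in> Cinf k" using ideal_sub[OF J pJ] .
      have FC: "(\<lambda>z. shift_fun n ?p z * G z) \<in> Cinf (n + k)" using shift_C[OF pC] G by (rule Cinf_mult)
      have "(\<lambda>z. shift_fun n ?p z * G z) \<in> Vs n"
        unfolding Vs_def
        apply (rule CollectI, rule conjI[OF FC])
        apply (rule exI[of _ "\<lambda>i z. 0"])
        using ceq_zero[OF T0_ideal inT] by simp
      then show "(\<lambda>z. (\<Prod>j<N. fs j (\<lambda>l. z (n + l))) * G z) \<in> Vs n"
        by (rule Vs_ext) (simp add: shift_fun_def)
    qed
  next
    case (step r)
    show ?case
    proof (intro allI impI ballI)
      fix fs G assume fs: "\<forall>j<r. fs j \<in> M" and G: "G \<in> Cinf (n + k)"
      obtain G0 H where G0: "G0 \<in> Cinf n" and HC: "\<forall>l<k. H l \<in> Cinf (n + k)"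
        and ex: "\<forall>z. G z = G0 z + (\<Sum>l<k. H l z * (z (n + l) - a l))"
        using had_expand[OF G] by (elim exE conjE)
      let ?p = "\<lambda>y. \<Prod>j<r. fs j y"
      let ?q = "\<lambda>l z. \<Prod>j<Suc r. (fs(r := (\<lambda>y. y l - a l))) j (\<lambda>l'. z (n + l'))"
      have pC: "?p \<in> Cinf k" using fs ideal_sub[OF M] by (intro Cinf_prod) auto
      have T2: "(\<lambda>z. \<Sum>l<k. ?q l z * H l z) \<in> Vs n"
      proof (rule Vs_sum)
        fix l assume "l \<in> {..<k}"
        then have l: "l < k" by simp
        have "\<forall>j<Suc r. (fs(r := (\<lambda>y. y l - a l))) j \<in> M" using fs aM[OF l] by (auto simp: less_Suc_eq)
        then have "\<forall>G\<in>Cinf (n + k). (\<lambda>z. ?q l z * G z) \<in> Vs n"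
          using step.IH[rule_format, of "fs(r := (\<lambda>y. y l - a l))"] by blast
        then show "(\<lambda>z. ?q l z * H l z) \<in> Vs n" using HC l by blast
      qed simp
      obtain c where c: "ceq J ?p (\<lambda>y. \<Sum>i<d. c i * e i y)" using span[OF pC] by blast
      have "shift_fun n (\<lambda>y. ?p y - (\<Sum>i<d. c i * e i y)) \<in> T0 n"
        using c unfolding ceq_def by (rule T0_gen)
      then have sc: "ceq (T0 n) (shift_fun n ?p) (\<lambda>z. \<Sum>i<d. c i * shift_fun n (e i) z)"
        unfolding ceq_def shift_fun_def .
      have G0C': "G0 \<in> Cinf (n + k)" using Cinf_mono[OF G0] by simp
      have "ceq (T0 n) (\<lambda>z. G0 z * shift_fun n ?p z) (\<lambda>z. G0 z * (\<Sum>i<d. c i * shift_fun n (e i) z))"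
        by (rule ceq_lmult[OF T0_ideal G0C' sc])
      moreover have "(\<lambda>z. G0 z * (\<Sum>i<d. c i * shift_fun n (e i) z)) = (\<lambda>z. \<Sum>i<d. (\<lambda>z. c i * G0 z) z * shift_fun n (e i) z)"
        by (simp add: sum_distrib_left mult.assoc mult.left_commute)
      ultimately have "ceq (T0 n) (\<lambda>z. G0 z * shift_fun n ?p z) (\<lambda>z. \<Sum>i<d. (\<lambda>z. c i * G0 z) z * shift_fun n (e i) z)"
        by simp
      moreover have "(\<lambda>z. G0 z * shift_fun n ?p z) \<in> Cinf (n + k)" using G0C' shift_C[OF pC] by (rule Cinf_mult)
      moreover have "\<forall>i<d. (\<lambda>z. c i * G0 z) \<in> Cinf n" using G0 by auto
      ultimately have T1: "(\<lambda>z. G0 z * shift_fun n ?p z) \<in> Vs n" unfolding Vs_def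
        by (intro CollectI conjI exI[of _ "\<lambda>i z. c i * G0 z"])
      have "(\<lambda>z. G0 z * shift_fun n ?p z + (\<Sum>l<k. ?q l z * H l z)) \<in> Vs n"
        using Vs_add[OF T1 T2] by simp
      then show "(\<lambda>z. (\<Prod>j<r. fs j (\<lambda>l. z (n + l))) * G z) \<in> Vs n"
      proof (rule Vs_ext)
        fix z
        let ?P = "\<Prod>j<r. fs j (\<lambda>l. z (n + l))"
        have prodS: "?q l z = ?P * (z (n + l) - a l)" for l
        proof -
          have "(\<Prod>j<r. (fs(r := (\<lambda>y. y l - a l))) j (\<lambda>l'. z (n + l'))) = ?P"
            by (rule prod.cong) auto
          then show ?thesis by (simp add: prod.lessThan_Suc)
        qed
        have "?P * G z = ?P * G0 z + (\<Sum>l<k. ?P * (H l z * (z (n + l) - a l)))"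
          using ex by (simp add: distrib_left sum_distrib_left)
        also have "(\<Sum>l<k. ?P * (H l z * (z (n + l) - a l))) = (\<Sum>l<k. ?q l z * H l z)"
          by (rule sum.cong[OF refl]) (simp add: prodS)
        also have "?P * G0 z = G0 z * shift_fun n ?p z" by (simp add: shift_fun_def)
        finally show "?P * G z = G0 z * shift_fun n ?p z + (\<Sum>l<k. ?q l z * H l z)" .
      qed
    qed
  qed
  have "\<forall>G\<in>Cinf (n + k). G \<in> Vs n" using key[of 0] by simp
  then show ?thesis using G by blast
qed

end

context wsetup
begin

lemma sl_sum_e:
  assumes C: "\<forall>i<d. C i \<in> Cinf n"
  shows "sl n x (\<lambda>z. \<Sum>i<d. C i z * shift_fun n (e i) z) = (\<lambda>y. \<Sum>i<d. C i x * e i y)"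
proof
  fix y
  have "sl n x (\<lambda>z. \<Sum>i<d. C i z * shift_fun n (e i) z) y = (\<Sum>i<d. sl n x (C i) y * sl n x (shift_fun n (e i)) y)"
    by (simp add: sl_def)
  also have "\<dots> = (\<Sum>i<d. C i x * e i y)"
    by (rule sum.cong[OF refl]) (use C eC in \<open>simp add: sl_Cn sl_shift\<close>)
  finally show "sl n x (\<lambda>z. \<Sum>i<d. C i z * shift_fun n (e i) z) y = (\<Sum>i<d. C i x * e i y)" .
qed

lemma cf_explicit:
  assumes C: "\<forall>i<d. C i \<in> Cinf n" and i: "i < d"
  shows "cf n i (\<lambda>z. \<Sum>i<d. C i z * shift_fun n (e i) z) = C i"
  unfolding cf_def sl_sum_e[OF C] using coefW_sum_e[OF i] by simp

lemma sl_diff: "sl n x (\<lambda>z. F z - G z) = (\<lambda>y. sl n x F y - sl n x G y)"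
  by (simp add: sl_def)
lemma sl_add: "sl n x (\<lambda>z. F z + G z) = (\<lambda>y. sl n x F y + sl n x G y)"
  by (simp add: sl_def)
lemma sl_mult: "sl n x (\<lambda>z. F z * G z) = (\<lambda>y. sl n x F y * sl n x G y)"
  by (simp add: sl_def)

lemma cf_repr:
  assumes F: "F \<in> Cinf (n + k)"
  shows "(\<forall>i<d. cf n i F \<in> Cinf n) \<and> ceq (T0 n) F (\<lambda>z. \<Sum>i<d. cf n i F z * shift_fun n (e i) z)"
proof -
  obtain C where CC: "\<forall>i<d. C i \<in> Cinf n" and c: "ceq (T0 n) F (\<lambda>z. \<Sum>i<d. C i z * shift_fun n (e i) z)"
    using Vs_all[OF F] unfolding Vs_def by blast
  have SC: "(\<lambda>z. \<Sum>i<d. C i z * shift_fun n (e i) z) \<in> Cinf (n + k)"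
    using CC eC by (intro Cinf_sum Cinf_mult) (auto intro: Cinf_mono shift_C)
  have eq: "cf n i F = C i" if i: "i < d" for i
  proof
    fix x
    have "sl n x (\<lambda>z. F z - (\<Sum>i<d. C i z * shift_fun n (e i) z)) \<in> J"
      using c unfolding ceq_def by (rule T0_sl)
    then have "ceq J (sl n x F) (sl n x (\<lambda>z. \<Sum>i<d. C i z * shift_fun n (e i) z))"
      unfolding ceq_def sl_diff .
    then have "coefW (sl n x F) i = coefW (sl n x (\<lambda>z. \<Sum>i<d. C i z * shift_fun n (e i) z)) i"
      by (rule coefW_ceq[OF sl_C[OF F] sl_C[OF SC] _ i])
    also have "\<dots> = C i x" unfolding sl_sum_e[OF CC] by (rule coefW_sum_e[OF i])
    finally show "cf n i F x = C i x" unfolding cf_def .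
  qed
  have "(\<lambda>z. \<Sum>i<d. cf n i F z * shift_fun n (e i) z) = (\<lambda>z. \<Sum>i<d. C i z * shift_fun n (e i) z)"
    by (rule ext, rule sum.cong[OF refl]) (simp add: eq)
  then show ?thesis using CC c eq by simp
qed

lemma cf_C: "F \<in> Cinf (n + k) \<Longrightarrow> i < d \<Longrightarrow> cf n i F \<in> Cinf n"
  using cf_repr by blast

lemma cf_ceq: "F \<in> Cinf (n + k) \<Longrightarrow> ceq (T0 n) F (\<lambda>z. \<Sum>i<d. cf n i F z * shift_fun n (e i) z)"
  using cf_repr by blast

lemma cf_diff:
  assumes "F \<in> Cinf (n + k)" "G \<in> Cinf (n + k)" "i < d"
  shows "cf n i (\<lambda>z. F z - G z) = (\<lambda>x. cf n i F x - cf n i G x)"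
  unfolding cf_def sl_diff using coefW_diff[OF sl_C sl_C] assms by simp

lemma cf_add:
  assumes "F \<in> Cinf (n + k)" "G \<in> Cinf (n + k)" "i < d"
  shows "cf n i (\<lambda>z. F z + G z) = (\<lambda>x. cf n i F x + cf n i G x)"
  unfolding cf_def sl_add using coefW_add[OF sl_C sl_C] assms by simp

lemma tensor_gens_C:
  assumes I: "is_ideal n I"
  shows "{(\<lambda>z. f (\<lambda>i. if i < n then z i else 0)) | f. f \<in> I} \<union> {shift_fun n g | g. g \<in> J} \<subseteq> Cinf (n + k)"
proof -
  have "(\<lambda>z. f (\<lambda>i. if i < n then z i else 0)) \<in> Cinf (n + k)" if "f \<in> I" for f
  proof -
    have fC: "f \<in> Cinf n" using ideal_sub[OF I that] .
    have "(\<lambda>z. f (\<lambda>i. if i < n then z i else 0)) = f" by (rule ext) (rule Cinf_dep[OF fC, symmetric])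
    then show ?thesis using Cinf_mono[OF fC] by simp
  qed
  then show ?thesis using T0_gens_C by blast
qed

lemma tensor_ideal: "is_ideal n I \<Longrightarrow> is_ideal (n + k) (tensor_ideal n I k J)"
  unfolding tensor_ideal_def by (rule ideal_gen_ideal[OF tensor_gens_C])

lemma T0_tensor: "is_ideal n I \<Longrightarrow> T0 n \<subseteq> tensor_ideal n I k J"
  unfolding tensor_ideal_def T0_def by (rule ideal_gen_mono[OF _ tensor_gens_C]) auto

lemma tensor_base:
  assumes I: "is_ideal n I" and f: "f \<in> I"
  shows "f \<in> tensor_ideal n I k J"
proof -
  have fC: "f \<in> Cinf n" using ideal_sub[OF I f] .
  have "(\<lambda>z. f (\<lambda>i. if i < n then z i else 0)) \<in> tensor_ideal n I k J"
    unfolding tensor_ideal_def by (rule ideal_gen_base) (use f in blast)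
  moreover have "(\<lambda>z. f (\<lambda>i. if i < n then z i else 0)) = f" by (rule ext) (rule Cinf_dep[OF fC, symmetric])
  ultimately show ?thesis by simp
qed

lemma cf_tensor:
  assumes I: "is_ideal n I" and G: "G \<in> tensor_ideal n I k J" and i: "i < d"
  shows "cf n i G \<in> I"
proof -
  let ?S = "{G \<in> Cinf (n + k). \<forall>i<d. cf n i G \<in> I}"
  have "is_ideal (n + k) ?S"
    unfolding is_ideal_def
  proof (intro conjI ballI)
    show "?S \<subseteq> Cinf (n + k)" by blast
    have "cf n i (\<lambda>x. 0) = (\<lambda>x. 0)" if "i < d" for i
      unfolding cf_def sl_def using coefW_J[OF ideal_0[OF J] that] by simp
    then show "(\<lambda>x. 0) \<in> ?S" using ideal_0[OF I] by auto
  next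
    fix F G assume F: "F \<in> ?S" and G: "G \<in> ?S"
    then show "(\<lambda>x. F x + G x) \<in> ?S" using cf_add ideal_add[OF I] by auto
  next
    fix A G assume A: "A \<in> Cinf (n + k)" and G: "G \<in> ?S"
    have GC: "G \<in> Cinf (n + k)" using G by blast
    have "cf n i (\<lambda>z. A z * G z) \<in> I" if i: "i < d" for i
    proof -
      have eq: "cf n i (\<lambda>z. A z * G z) = (\<lambda>x. \<Sum>i'<d. cf n i (\<lambda>z. A z * shift_fun n (e i') z) x * cf n i' G x)"
      proof
        fix x
        have spec: "ceq J (sl n x G) (\<lambda>y. \<Sum>i'<d. cf n i' G x * e i' y)"
          using coefW_spec[OF sl_C[OF GC, of x]] unfolding cf_def .
        have "ceq J (\<lambda>y. sl n x A y * sl n x G y) (\<lambda>y. sl n x A y * (\<Sum>i'<d. cf n i' G x * e i' y))"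
          by (rule ceq_lmult[OF J sl_C[OF A] spec])
        moreover have "(\<lambda>y. sl n x A y * (\<Sum>i'<d. cf n i' G x * e i' y)) = (\<lambda>y. \<Sum>i'<d. cf n i' G x * (sl n x A y * e i' y))"
          by (simp add: sum_distrib_left mult.left_commute)
        ultimately have c1: "ceq J (sl n x (\<lambda>z. A z * G z)) (\<lambda>y. \<Sum>i'<d. cf n i' G x * (sl n x A y * e i' y))"
          unfolding sl_mult by simp
        have prodC: "(\<lambda>y. sl n x A y * e i' y) \<in> Cinf k" if "i' < d" for i'
          using sl_C[OF A] eC[OF that] by (rule Cinf_mult)
        have termC: "(\<lambda>y. cf n i' G x * (sl n x A y * e i' y)) \<in> Cinf k" if "i' < d" for i'
          using Cinf_mult[OF Cinf_const prodC[OF that]] by simp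
        have "coefW (sl n x (\<lambda>z. A z * G z)) i = coefW (\<lambda>y. \<Sum>i'<d. cf n i' G x * (sl n x A y * e i' y)) i"
          by (rule coefW_ceq[OF sl_C[OF Cinf_mult[OF A GC]] _ c1 i])
             (rule Cinf_sum, use termC in simp)
        also have "\<dots> = (\<Sum>i'<d. coefW (\<lambda>y. cf n i' G x * (sl n x A y * e i' y)) i)"
          by (rule coefW_sum) (use termC i in auto)
        also have "\<dots> = (\<Sum>i'<d. cf n i' G x * coefW (\<lambda>y. sl n x A y * e i' y) i)"
          by (rule sum.cong[OF refl]) (use prodC i in \<open>simp add: coefW_scale\<close>)
        also have "\<dots> = (\<Sum>i'<d. cf n i (\<lambda>z. A z * shift_fun n (e i') z) x * cf n i' G x)"
        proof (rule sum.cong[OF refl])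
          fix i' assume "i' \<in> {..<d}"
          then have "i' < d" by simp
          then have "sl n x (\<lambda>z. A z * shift_fun n (e i') z) = (\<lambda>y. sl n x A y * e i' y)"
            unfolding sl_mult using sl_shift[OF eC] by simp
          then show "cf n i' G x * coefW (\<lambda>y. sl n x A y * e i' y) i = cf n i (\<lambda>z. A z * shift_fun n (e i') z) x * cf n i' G x"
            unfolding cf_def by simp
        qed
        finally show "cf n i (\<lambda>z. A z * G z) x = (\<Sum>i'<d. cf n i (\<lambda>z. A z * shift_fun n (e i') z) x * cf n i' G x)"
          unfolding cf_def .
      qed
      have "(\<lambda>x. \<Sum>i'<d. cf n i (\<lambda>z. A z * shift_fun n (e i') z) x * cf n i' G x) \<in> I"
      proof (rule ideal_sum[OF I])
        fix i' assume "i' \<in> {..<d}"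
        then have i': "i' < d" by simp
        have "(\<lambda>z. A z * shift_fun n (e i') z) \<in> Cinf (n + k)" using A shift_C[OF eC[OF i']] by (rule Cinf_mult)
        then have "cf n i (\<lambda>z. A z * shift_fun n (e i') z) \<in> Cinf n" using cf_C i by blast
        moreover have "cf n i' G \<in> I" using G i' by blast
        ultimately show "(\<lambda>x. cf n i (\<lambda>z. A z * shift_fun n (e i') z) x * cf n i' G x) \<in> I"
          by (rule ideal_lmult[OF I])
      qed
      then show ?thesis using eq by simp
    qed
    then show "(\<lambda>x. A x * G x) \<in> ?S" using A GC by auto
  qed
  moreover have "{(\<lambda>z. f (\<lambda>i. if i < n then z i else 0)) | f. f \<in> I} \<union> {shift_fun n g | g. g \<in> J} \<subseteq> ?S"
  proof
    fix F assume F: "F \<in> {(\<lambda>z. f (\<lambda>i. if i < n then z i else 0)) | f. f \<in> I} \<union> {shift_fun n g | g. g \<in> J}"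
    have FC: "F \<in> Cinf (n + k)" using tensor_gens_C[OF I] F by blast
    show "F \<in> ?S"
    proof (cases "F \<in> {shift_fun n g | g. g \<in> J}")
      case True
      then obtain g where g: "g \<in> J" and Fg: "F = shift_fun n g" by blast
      have "cf n i F = (\<lambda>x. 0)" if "i < d" for i
        unfolding cf_def Fg sl_shift[OF ideal_sub[OF J g]] using coefW_J[OF g that] by simp
      then show ?thesis using FC ideal_0[OF I] by auto
    next
      case False
      then obtain f where f: "f \<in> I" and Ff: "F = (\<lambda>z. f (\<lambda>i. if i < n then z i else 0))" using F by blast
      have fC: "f \<in> Cinf n" using ideal_sub[OF I f] .
      have Ff': "F = f" unfolding Ff by (rule ext) (rule Cinf_dep[OF fC, symmetric])
      have "cf n i F = (\<lambda>x. coefW (\<lambda>y. 1) i * f x)" if i: "i < d" for i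
      proof
        fix x
        have "sl n x F = (\<lambda>y. f x * 1)" unfolding Ff' sl_Cn[OF fC] by simp
        then show "cf n i F x = coefW (\<lambda>y. 1) i * f x"
          unfolding cf_def using coefW_scale[OF Cinf_const i, of "f x" 1] by simp
      qed
      then show ?thesis using FC ideal_scale[OF I f] by auto
    qed
  qed
  ultimately have "tensor_ideal n I k J \<subseteq> ?S" unfolding tensor_ideal_def by (rule ideal_gen_least)
  then show ?thesis using G i by blast
qed

lemma cf_inj:
  assumes I: "is_ideal n I" and A: "\<forall>i<d. A i \<in> Cinf n"
    and T: "(\<lambda>z. \<Sum>i<d. A i z * shift_fun n (e i) z) \<in> tensor_ideal n I k J" and i: "i < d"
  shows "A i \<in> I"
  using cf_tensor[OF I T i] cf_explicit[OF A i] by simp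

end

lemma idx_lt: "j < m \<Longrightarrow> i < d \<Longrightarrow> j * d + i < m * (d::nat)"
proof -
  assume "j < m" "i < d"
  then have "j * d + i < Suc j * d" by simp
  also have "\<dots> \<le> m * d" using \<open>j < m\<close> by (intro mult_le_mono1) simp
  finally show ?thesis .
qed

lemma idx_div: "i < d \<Longrightarrow> (j * d + i) div d = (j::nat)"
  by simp
lemma idx_mod: "i < d \<Longrightarrow> (j * d + i) mod d = (i::nat)"
  by simp

lemma alg_hom_C: "alg_hom n I m' J' h \<Longrightarrow> f \<in> Cinf n \<Longrightarrow> h f \<in> Cinf m'"
  unfolding alg_hom_def by blast
lemma alg_hom_ceq: "alg_hom n I m' J' h \<Longrightarrow> f \<in> Cinf n \<Longrightarrow> g \<in> Cinf n \<Longrightarrow> ceq I f g \<Longrightarrow> ceq J' (h f) (h g)"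
  unfolding alg_hom_def by blast
lemma alg_hom_op: "alg_hom n I m' J' h \<Longrightarrow> G \<in> Cinf k' \<Longrightarrow> (\<forall>j<k'. fs j \<in> Cinf n) \<Longrightarrow>
    ceq J' (h (cinf_op k' G fs)) (cinf_op k' G (\<lambda>j. h (fs j)))"
  unfolding alg_hom_def by blast

lemma alg_hom_mem:
  assumes I: "is_ideal n I" and J': "is_ideal m' J'" and h: "alg_hom n I m' J' h" and f: "f \<in> I"
  shows "h f \<in> J'"
proof -
  have "ceq J' (h (cinf_op 0 (\<lambda>w. 0) (\<lambda>j x. 0))) (cinf_op 0 (\<lambda>w. 0) (\<lambda>j. h (\<lambda>x. 0)))"
    by (rule alg_hom_op[OF h]) auto
  moreover have "cinf_op 0 (\<lambda>w. 0) fs = (\<lambda>x. 0)" for fs by (simp add: cinf_op_def)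
  ultimately have "ceq J' (h (\<lambda>x. 0)) (\<lambda>x. 0)" by simp
  then have h0: "h (\<lambda>x. 0) \<in> J'" by (simp add: ceq_def)
  have "ceq J' (h f) (h (\<lambda>x. 0))"
    by (rule alg_hom_ceq[OF h ideal_sub[OF I f] Cinf_const ceq_zero[OF I f]])
  then show ?thesis using ceq_mem[OF J' _ h0] by blast
qed

lemma ceq_mono: "ceq I f g \<Longrightarrow> I \<subseteq> I' \<Longrightarrow> ceq I' f g"
  unfolding ceq_def by blast

context wsetup
begin

definition Pv :: "nat \<Rightarrow> (nat \<Rightarrow> fn) \<Rightarrow> nat \<Rightarrow> fn" where
  "Pv n b j = (\<lambda>z. \<Sum>i<d. b (j * d + i) z * shift_fun n (e i) z)"

lemma Pv_C:
  assumes b: "\<And>q. q < m * d \<Longrightarrow> b q \<in> Cinf n" and j: "j < m"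
  shows "Pv n b j \<in> Cinf (n + k)"
  unfolding Pv_def
proof (rule Cinf_sum, rule Cinf_mult)
  fix i assume "i \<in> {..<d}"
  then have i: "i < d" by simp
  show "b (j * d + i) \<in> Cinf (n + k)" using Cinf_mono[OF b[OF idx_lt[OF j i]]] by simp
  show "shift_fun n (e i) \<in> Cinf (n + k)" using shift_C[OF eC[OF i]] .
qed

lemma Pv_cong:
  assumes I: "is_ideal n I" and bb: "\<And>q. q < m * d \<Longrightarrow> ceq I (b q) (b' q)" and j: "j < m"
  shows "ceq (tensor_ideal n I k J) (Pv n b j) (Pv n b' j)"
proof -
  have "(\<lambda>z. \<Sum>i<d. (b (j * d + i) z - b' (j * d + i) z) * shift_fun n (e i) z) \<in> tensor_ideal n I k J"
  proof (rule ideal_sum[OF tensor_ideal[OF I]])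
    fix i assume "i \<in> {..<d}"
    then have i: "i < d" by simp
    have "(\<lambda>z. b (j * d + i) z - b' (j * d + i) z) \<in> tensor_ideal n I k J"
      using tensor_base[OF I] bb[OF idx_lt[OF j i]] unfolding ceq_def by blast
    then show "(\<lambda>z. (b (j * d + i) z - b' (j * d + i) z) * shift_fun n (e i) z) \<in> tensor_ideal n I k J"
      using ideal_rmult[OF tensor_ideal[OF I] shift_C[OF eC[OF i]]] by blast
  qed
  moreover have "(\<lambda>z. Pv n b j z - Pv n b' j z) = (\<lambda>z. \<Sum>i<d. (b (j * d + i) z - b' (j * d + i) z) * shift_fun n (e i) z)"
    unfolding Pv_def by (simp add: sum_subtractf left_diff_distrib)
  ultimately show ?thesis unfolding ceq_def by simp
qed

lemma cf_Pv:
  assumes b: "\<And>q. q < m * d \<Longrightarrow> b q \<in> Cinf n" and j: "j < m" and i: "i < d"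
  shows "cf n i (Pv n b j) = b (j * d + i)"
proof -
  have "\<forall>i<d. b (j * d + i) \<in> Cinf n" using b idx_lt[OF j] by blast
  from cf_explicit[OF this i] show ?thesis unfolding Pv_def .
qed

definition sig :: "nat \<Rightarrow> nat \<Rightarrow> (nat \<Rightarrow> fn) \<Rightarrow> (nat \<Rightarrow> real) \<Rightarrow> (nat \<Rightarrow> real)" where
  "sig p n b z = (\<lambda>l. if l < p then b l z else if l < p + k then z (n + (l - p)) else 0)"

lemma sig_C:
  assumes b: "\<And>q. q < p \<Longrightarrow> b q \<in> Cinf n" and F: "F \<in> Cinf (p + k)"
  shows "(\<lambda>z. F (sig p n b z)) \<in> Cinf (n + k)"
proof -
  have "(\<lambda>z. F (sig p n b z)) = cinf_op (p + k) F (\<lambda>l. if l < p then b l else (\<lambda>z. z (n + (l - p))))"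
    unfolding cinf_op_def sig_def by (rule ext) (rule arg_cong[where f=F], auto)
  moreover have "cinf_op (p + k) F (\<lambda>l. if l < p then b l else (\<lambda>z. z (n + (l - p)))) \<in> Cinf (n + k)"
  proof (rule Cinf_op[OF F])
    fix l assume "l < p + k"
    show "(if l < p then b l else (\<lambda>z. z (n + (l - p)))) \<in> Cinf (n + k)"
    proof (cases "l < p")
      case True
      then show ?thesis using Cinf_mono[OF b[OF True], of "n + k"] by simp
    next
      case False
      then show ?thesis using \<open>l < p + k\<close> by auto
    qed
  qed
  ultimately show ?thesis by simp
qed

lemma sig_shift:
  assumes g: "g \<in> Cinf k"
  shows "shift_fun p g (sig p n b z) = shift_fun n g z"
proof -
  have "(\<lambda>j. sig p n b z (p + j)) = (\<lambda>j. if j < k then z (n + j) else 0)" by (auto simp: sig_def)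
  then show ?thesis unfolding shift_fun_def using Cinf_dep[OF g, of "\<lambda>j. z (n + j)"] by simp
qed

lemma sig_trunc:
  "(\<lambda>z. f (\<lambda>i. if i < p then sig p n b z i else 0)) = cinf_op p f b"
  unfolding cinf_op_def sig_def by (rule ext) (rule arg_cong[where f=f], auto)

lemma sig_Pv:
  assumes b: "\<And>q. q < m * d \<Longrightarrow> b q \<in> Cinf n" and j: "j < m"
  shows "Pv (m * d) (\<lambda>q x. x q) j (sig (m * d) n b z) = Pv n b j z"
  unfolding Pv_def
proof (rule sum.cong[OF refl])
  fix i assume "i \<in> {..<d}"
  then have i: "i < d" by simp
  show "sig (m * d) n b z (j * d + i) * shift_fun (m * d) (e i) (sig (m * d) n b z) =
        b (j * d + i) z * shift_fun n (e i) z"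
    using idx_lt[OF j i] sig_shift[OF eC[OF i]] by (simp add: sig_def)
qed

definition Xk :: "nat \<Rightarrow> fn \<Rightarrow> fn" where
  "Xk m \<kappa> = cinf_op m \<kappa> (Pv (m * d) (\<lambda>q x. x q))"

lemma sig_Xk:
  assumes b: "\<And>q. q < m * d \<Longrightarrow> b q \<in> Cinf n"
  shows "(\<lambda>z. Xk m \<kappa> (sig (m * d) n b z)) = cinf_op m \<kappa> (Pv n b)"
  unfolding Xk_def cinf_op_def
  by (rule ext) (rule arg_cong[where f=\<kappa>], auto simp: sig_Pv[OF b])

lemma Xk_C:
  assumes "\<kappa> \<in> Cinf m" shows "Xk m \<kappa> \<in> Cinf (m * d + k)"
  unfolding Xk_def by (rule Cinf_op[OF assms]) (rule Pv_C, auto)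

lemma cf_sig:
  assumes b: "\<And>q. q < p \<Longrightarrow> b q \<in> Cinf n" and F: "F \<in> Cinf (p + k)"
  shows "cinf_op p (cf p i F) b = cf n i (\<lambda>z. F (sig p n b z))"
proof
  fix x
  have "sl p (\<lambda>j. if j < p then b j x else 0) F = sl n x (\<lambda>z. F (sig p n b z))"
  proof
    fix y
    have bx: "b l (\<lambda>l. if l < n then x l else if l < n + k then y (l - n) else 0) = b l x" if "l < p" for l
    proof -
      have "(\<lambda>i. if i < n then (if i < n then x i else if i < n + k then y (i - n) else 0) else 0) = (\<lambda>i. if i < n then x i else 0)"
        by auto
      then show ?thesis using Cinf_dep[OF b[OF that], of x] Cinf_dep[OF b[OF that], of "\<lambda>l. if l < n then x l else if l < n + k then y (l - n) else 0"]
        by simp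
    qed
    show "sl p (\<lambda>j. if j < p then b j x else 0) F y = sl n x (\<lambda>z. F (sig p n b z)) y"
      unfolding sl_def sig_def by (rule arg_cong[where f=F], rule ext) (auto simp: bx)
  qed
  then show "cinf_op p (cf p i F) b x = cf n i (\<lambda>z. F (sig p n b z)) x"
    unfolding cinf_op_def cf_def by simp
qed

end

context wsetup
begin

definition Lid :: "nat \<Rightarrow> fn set \<Rightarrow> fn set" where
  "Lid m K = ideal_gen (m * d) {cf (m * d) i (Xk m \<kappa>) | \<kappa> i. \<kappa> \<in> K \<and> i < d}"

definition PhiC :: "nat \<Rightarrow> nat \<Rightarrow> (fn \<Rightarrow> fn) \<Rightarrow> fn \<Rightarrow> fn" where
  "PhiC m n h = (\<lambda>f. cinf_op m f (Pv n (\<lambda>q. h (\<lambda>x. x q))))"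

definition aa :: "nat \<Rightarrow> (fn \<Rightarrow> fn) \<Rightarrow> nat \<Rightarrow> fn" where
  "aa n g q = cf n (q mod d) (g (\<lambda>x. x (q div d)))"

definition PsiC :: "nat \<Rightarrow> nat \<Rightarrow> (fn \<Rightarrow> fn) \<Rightarrow> fn \<Rightarrow> fn" where
  "PsiC m n g = (\<lambda>F. cinf_op (m * d) F (aa n g))"

lemma L_gens_C:
  assumes K: "is_ideal m K"
  shows "{cf (m * d) i (Xk m \<kappa>) | \<kappa> i. \<kappa> \<in> K \<and> i < d} \<subseteq> Cinf (m * d)"
proof
  fix F assume "F \<in> {cf (m * d) i (Xk m \<kappa>) | \<kappa> i. \<kappa> \<in> K \<and> i < d}"
  then obtain \<kappa> i where \<kappa>: "\<kappa> \<in> K" and i: "i < d" and F: "F = cf (m * d) i (Xk m \<kappa>)" by blast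
  show "F \<in> Cinf (m * d)" unfolding F by (rule cf_C[OF Xk_C[OF ideal_sub[OF K \<kappa>]] i])
qed

lemma L_ideal: "is_ideal m K \<Longrightarrow> is_ideal (m * d) (Lid m K)"
  unfolding Lid_def by (rule ideal_gen_ideal[OF L_gens_C])

lemma Xk_T:
  assumes K: "is_ideal m K" and \<kappa>: "\<kappa> \<in> K"
  shows "Xk m \<kappa> \<in> tensor_ideal (m * d) (Lid m K) k J"
proof -
  let ?p = "m * d" and ?T = "tensor_ideal (m * d) (Lid m K) k J"
  have L: "is_ideal ?p (Lid m K)" by (rule L_ideal[OF K])
  have T: "is_ideal (?p + k) ?T" by (rule tensor_ideal[OF L])
  have XC: "Xk m \<kappa> \<in> Cinf (?p + k)" by (rule Xk_C[OF ideal_sub[OF K \<kappa>]])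
  have c: "ceq ?T (Xk m \<kappa>) (\<lambda>z. \<Sum>i<d. cf ?p i (Xk m \<kappa>) z * shift_fun ?p (e i) z)"
    by (rule ceq_mono[OF cf_ceq[OF XC] T0_tensor[OF L]])
  have "(\<lambda>z. \<Sum>i<d. cf ?p i (Xk m \<kappa>) z * shift_fun ?p (e i) z) \<in> ?T"
  proof (rule ideal_sum[OF T])
    fix i assume "i \<in> {..<d}"
    then have i: "i < d" by simp
    have "cf ?p i (Xk m \<kappa>) \<in> Lid m K" unfolding Lid_def by (rule ideal_gen_base) (use \<kappa> i in auto)
    then have "cf ?p i (Xk m \<kappa>) \<in> ?T" by (rule tensor_base[OF L])
    then show "(\<lambda>z. cf ?p i (Xk m \<kappa>) z * shift_fun ?p (e i) z) \<in> ?T"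
      by (rule ideal_rmult[OF T shift_C[OF eC[OF i]]])
  qed
  then show ?thesis by (rule ceq_mem[OF T c])
qed

lemma sig_T:
  assumes K: "is_ideal m K" and I: "is_ideal n I"
    and b: "\<And>q. q < m * d \<Longrightarrow> b q \<in> Cinf n"
    and bL: "\<And>f. f \<in> Lid m K \<Longrightarrow> cinf_op (m * d) f b \<in> I"
    and F: "F \<in> tensor_ideal (m * d) (Lid m K) k J"
  shows "(\<lambda>z. F (sig (m * d) n b z)) \<in> tensor_ideal n I k J"
proof -
  have sm: "(\<lambda>z. G (sig (m * d) n b z)) \<in> Cinf (n + k)" if "G \<in> Cinf (m * d + k)" for G
    by (rule sig_C[where b=b and p="m * d" and n=n, OF b that])
  have gens: "(\<lambda>z. G (sig (m * d) n b z)) \<in> tensor_ideal n I k J"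
    if G: "G \<in> {(\<lambda>z. f (\<lambda>i. if i < m * d then z i else 0)) | f. f \<in> Lid m K} \<union> {shift_fun (m * d) g | g. g \<in> J}" for G
  proof (cases "G \<in> {shift_fun (m * d) g | g. g \<in> J}")
    case True
    then obtain g where g: "g \<in> J" and Gg: "G = shift_fun (m * d) g" by blast
    have "(\<lambda>z. G (sig (m * d) n b z)) = shift_fun n g"
      unfolding Gg by (rule ext) (rule sig_shift[OF ideal_sub[OF J g]])
    moreover have "shift_fun n g \<in> tensor_ideal n I k J" using T0_tensor[OF I] T0_gen[OF g] by blast
    ultimately show ?thesis by simp
  next
    case False
    then obtain f where f: "f \<in> Lid m K" and Gf: "G = (\<lambda>z. f (\<lambda>i. if i < m * d then z i else 0))" using G by blast
    have "(\<lambda>z. G (sig (m * d) n b z)) = cinf_op (m * d) f b" unfolding Gf by (rule sig_trunc)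
    then show ?thesis using tensor_base[OF I bL[OF f]] by simp
  qed
  show ?thesis
    by (rule subst_ideal[OF tensor_ideal[OF I] sm gens F[unfolded tensor_ideal_def] tensor_gens_C[OF L_ideal[OF K]]])
qed

lemma coordC: "q < p \<Longrightarrow> (\<lambda>x. x q) \<in> Cinf p" by (rule Cinf_coord)

lemma hb_C: assumes "alg_hom (m * d) L n I h" "q < m * d" shows "h (\<lambda>x. x q) \<in> Cinf n"
  using alg_hom_C[OF assms(1) Cinf_coord[OF assms(2)]] .

lemma Phi_K:
  assumes K: "is_ideal m K" and I: "is_ideal n I" and h: "alg_hom (m * d) (Lid m K) n I h" and \<kappa>: "\<kappa> \<in> K"
  shows "PhiC m n h \<kappa> \<in> tensor_ideal n I k J"
proof -
  let ?b = "\<lambda>q. h (\<lambda>x. x q)"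
  have b: "?b q \<in> Cinf n" if "q < m * d" for q using hb_C[OF h that] .
  have bL: "cinf_op (m * d) f ?b \<in> I" if f: "f \<in> Lid m K" for f
  proof -
    have fC: "f \<in> Cinf (m * d)" using ideal_sub[OF L_ideal[OF K] f] .
    have "ceq I (h (cinf_op (m * d) f (\<lambda>q x. x q))) (cinf_op (m * d) f ?b)"
      by (rule alg_hom_op[OF h fC]) auto
    then have c: "ceq I (h f) (cinf_op (m * d) f ?b)" using cinf_op_coord[OF fC] by simp
    have hf: "h f \<in> I" by (rule alg_hom_mem[OF L_ideal[OF K] I h f])
    show ?thesis using ceq_mem[OF I ceq_sym[OF I c] hf] .
  qed
  have X: "(\<lambda>z. Xk m \<kappa> (sig (m * d) n ?b z)) \<in> tensor_ideal n I k J"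
    by (rule sig_T[OF K I b bL Xk_T[OF K \<kappa>]])
  have eq: "(\<lambda>z. Xk m \<kappa> (sig (m * d) n ?b z)) = PhiC m n h \<kappa>"
    unfolding PhiC_def by (rule sig_Xk[OF b])
  from X eq show ?thesis by simp
qed

lemma Phi_hom:
  assumes K: "is_ideal m K" and I: "is_ideal n I" and h: "alg_hom (m * d) (Lid m K) n I h"
  shows "alg_hom m K (n + k) (tensor_ideal n I k J) (PhiC m n h)"
  unfolding alg_hom_def
proof (intro conjI ballI allI impI)
  let ?b = "\<lambda>q. h (\<lambda>x. x q)"
  have b: "?b q \<in> Cinf n" if "q < m * d" for q using hb_C[OF h that] .
  fix f assume f: "f \<in> Cinf m"
  show "PhiC m n h f \<in> Cinf (n + k)" unfolding PhiC_def
    by (rule Cinf_op[OF f]) (rule Pv_C[OF b])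
next
  fix f g assume f: "f \<in> Cinf m" and g: "g \<in> Cinf m" and fg: "ceq K f g"
  have "PhiC m n h (\<lambda>x. f x - g x) \<in> tensor_ideal n I k J"
    using Phi_K[OF K I h fg[unfolded ceq_def]] .
  moreover have "PhiC m n h (\<lambda>x. f x - g x) = (\<lambda>z. PhiC m n h f z - PhiC m n h g z)"
    unfolding PhiC_def cinf_op_def by simp
  ultimately show "ceq (tensor_ideal n I k J) (PhiC m n h f) (PhiC m n h g)" unfolding ceq_def by simp
next
  fix k' G fs assume "G \<in> Cinf k'" "\<forall>j<k'. fs j \<in> Cinf m"
  show "ceq (tensor_ideal n I k J) (PhiC m n h (cinf_op k' G fs)) (cinf_op k' G (\<lambda>j. PhiC m n h (fs j)))"
    by (rule ceq_eq[OF tensor_ideal[OF I]]) (simp add: PhiC_def cinf_op_def)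
qed

lemma aa_C:
  assumes g: "alg_hom m K (n + k) T g" and q: "q < m * d"
  shows "aa n g q \<in> Cinf n"
proof -
  have dpos: "0 < d" using q by (cases d) auto
  have qd: "q div d < m" using q by (simp add: less_mult_imp_div_less)
  have "g (\<lambda>x. x (q div d)) \<in> Cinf (n + k)" using alg_hom_C[OF g Cinf_coord[OF qd]] .
  moreover have "q mod d < d" using dpos by simp
  ultimately show ?thesis unfolding aa_def by (rule cf_C)
qed

lemma Pv_aa:
  assumes I: "is_ideal n I" and g: "alg_hom m K (n + k) (tensor_ideal n I k J) g" and j: "j < m"
  shows "ceq (tensor_ideal n I k J) (g (\<lambda>x. x j)) (Pv n (aa n g) j)"
proof -
  have gC: "g (\<lambda>x. x j) \<in> Cinf (n + k)" using alg_hom_C[OF g coordC[OF j]] .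
  have "Pv n (aa n g) j = (\<lambda>z. \<Sum>i<d. cf n i (g (\<lambda>x. x j)) z * shift_fun n (e i) z)"
    unfolding Pv_def aa_def by (rule ext, rule sum.cong[OF refl]) simp
  then show ?thesis using ceq_mono[OF cf_ceq[OF gC] T0_tensor[OF I]] by simp
qed

lemma Psi_L:
  assumes K: "is_ideal m K" and I: "is_ideal n I" and g: "alg_hom m K (n + k) (tensor_ideal n I k J) g"
    and F: "F \<in> Lid m K"
  shows "PsiC m n g F \<in> I"
proof -
  let ?p = "m * d" and ?T = "tensor_ideal n I k J"
  have T: "is_ideal (n + k) ?T" by (rule tensor_ideal[OF I])
  have b: "aa n g q \<in> Cinf n" if "q < ?p" for q by (rule aa_C[OF g that])
  have opeq: "(\<lambda>x. G (\<lambda>j. if j < ?p then aa n g j x else 0)) = cinf_op ?p G (aa n g)" for G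
    unfolding cinf_op_def ..
  have "(\<lambda>x. F (\<lambda>j. if j < ?p then aa n g j x else 0)) \<in> I"
  proof (rule subst_ideal[OF I _ _ F[unfolded Lid_def] L_gens_C[OF K]])
    fix G assume "G \<in> Cinf ?p"
    then show "(\<lambda>x. G (\<lambda>j. if j < ?p then aa n g j x else 0)) \<in> Cinf n"
      unfolding opeq by (rule Cinf_op) (rule b)
  next
    fix G assume "G \<in> {cf ?p i (Xk m \<kappa>) | \<kappa> i. \<kappa> \<in> K \<and> i < d}"
    then obtain \<kappa> i where \<kappa>: "\<kappa> \<in> K" and i: "i < d" and G: "G = cf ?p i (Xk m \<kappa>)" by blast
    have \<kappa>C: "\<kappa> \<in> Cinf m" using ideal_sub[OF K \<kappa>] .
    have XC: "Xk m \<kappa> \<in> Cinf (?p + k)" by (rule Xk_C[OF \<kappa>C])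
    have e1: "cinf_op ?p (cf ?p i (Xk m \<kappa>)) (aa n g) = cf n i (\<lambda>z. Xk m \<kappa> (sig ?p n (aa n g) z))"
      by (rule cf_sig[OF b XC])
    have e2: "(\<lambda>z. Xk m \<kappa> (sig ?p n (aa n g) z)) = cinf_op m \<kappa> (Pv n (aa n g))"
      by (rule sig_Xk[OF b])
    have eq: "cinf_op ?p G (aa n g) = cf n i (cinf_op m \<kappa> (Pv n (aa n g)))"
      using e1 e2 G by simp
    have gc: "g (\<lambda>x. x j) \<in> Cinf (n + k)" if "j < m" for j using alg_hom_C[OF g Cinf_coord[OF that]] .
    have c1: "ceq ?T (cinf_op m \<kappa> (Pv n (aa n g))) (cinf_op m \<kappa> (\<lambda>j. g (\<lambda>x. x j)))"
    proof (rule cong_cinf_op[OF T \<kappa>C])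
      fix j assume j: "j < m"
      show "Pv n (aa n g) j \<in> Cinf (n + k) \<and> g (\<lambda>x. x j) \<in> Cinf (n + k) \<and> ceq ?T (Pv n (aa n g) j) (g (\<lambda>x. x j))"
        using Pv_C[OF b j] gc[OF j] ceq_sym[OF T Pv_aa[OF I g j]] by (intro conjI)
    qed
    have "ceq ?T (g (cinf_op m \<kappa> (\<lambda>j x. x j))) (cinf_op m \<kappa> (\<lambda>j. g (\<lambda>x. x j)))"
      by (rule alg_hom_op[OF g \<kappa>C]) auto
    then have c2: "ceq ?T (g \<kappa>) (cinf_op m \<kappa> (\<lambda>j. g (\<lambda>x. x j)))" using cinf_op_coord[OF \<kappa>C] by simp
    have g\<kappa>: "g \<kappa> \<in> ?T" by (rule alg_hom_mem[OF K T g \<kappa>])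
    have "cinf_op m \<kappa> (Pv n (aa n g)) \<in> ?T"
      using ceq_mem[OF T ceq_trans[OF T c1 ceq_sym[OF T c2]] g\<kappa>] .
    then have "cf n i (cinf_op m \<kappa> (Pv n (aa n g))) \<in> I" by (rule cf_tensor[OF I _ i])
    then show "(\<lambda>x. G (\<lambda>j. if j < ?p then aa n g j x else 0)) \<in> I" unfolding opeq eq .
  qed
  then show ?thesis unfolding PsiC_def opeq .
qed

lemma Psi_hom:
  assumes K: "is_ideal m K" and I: "is_ideal n I" and g: "alg_hom m K (n + k) (tensor_ideal n I k J) g"
  shows "alg_hom (m * d) (Lid m K) n I (PsiC m n g)"
  unfolding alg_hom_def
proof (intro conjI ballI allI impI)
  fix F assume F: "F \<in> Cinf (m * d)"
  show "PsiC m n g F \<in> Cinf n" unfolding PsiC_def by (rule Cinf_op[OF F]) (rule aa_C[OF g])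
next
  fix F G assume F: "F \<in> Cinf (m * d)" and G: "G \<in> Cinf (m * d)" and FG: "ceq (Lid m K) F G"
  have "PsiC m n g (\<lambda>x. F x - G x) \<in> I" using Psi_L[OF K I g FG[unfolded ceq_def]] .
  moreover have "PsiC m n g (\<lambda>x. F x - G x) = (\<lambda>z. PsiC m n g F z - PsiC m n g G z)"
    unfolding PsiC_def cinf_op_def by simp
  ultimately show "ceq I (PsiC m n g F) (PsiC m n g G)" unfolding ceq_def by simp
next
  fix k' G fs assume "G \<in> Cinf k'" "\<forall>j<k'. fs j \<in> Cinf (m * d)"
  show "ceq I (PsiC m n g (cinf_op k' G fs)) (cinf_op k' G (\<lambda>j. PsiC m n g (fs j)))"
    by (rule ceq_eq[OF I]) (simp add: PsiC_def cinf_op_def)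
qed

end

context wsetup
begin

lemma Phi_equiv:
  assumes K: "is_ideal m K" and I: "is_ideal n I"
    and h1: "alg_hom (m * d) (Lid m K) n I h1" and h2: "alg_hom (m * d) (Lid m K) n I h2"
    and he: "hom_equiv (m * d) I h1 h2"
  shows "hom_equiv m (tensor_ideal n I k J) (PhiC m n h1) (PhiC m n h2)"
  unfolding hom_equiv_def
proof
  fix f assume f: "f \<in> Cinf m"
  let ?T = "tensor_ideal n I k J"
  have T: "is_ideal (n + k) ?T" by (rule tensor_ideal[OF I])
  have b1: "h1 (\<lambda>x. x q) \<in> Cinf n" if "q < m * d" for q using hb_C[OF h1 that] .
  have b2: "h2 (\<lambda>x. x q) \<in> Cinf n" if "q < m * d" for q using hb_C[OF h2 that] .
  have bb: "ceq I (h1 (\<lambda>x. x q)) (h2 (\<lambda>x. x q))" if "q < m * d" for q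
    using he Cinf_coord[OF that] unfolding hom_equiv_def by blast
  show "ceq ?T (PhiC m n h1 f) (PhiC m n h2 f)"
    unfolding PhiC_def
  proof (rule cong_cinf_op[OF T f])
    fix j assume j: "j < m"
    show "Pv n (\<lambda>q. h1 (\<lambda>x. x q)) j \<in> Cinf (n + k) \<and> Pv n (\<lambda>q. h2 (\<lambda>x. x q)) j \<in> Cinf (n + k) \<and>
          ceq ?T (Pv n (\<lambda>q. h1 (\<lambda>x. x q)) j) (Pv n (\<lambda>q. h2 (\<lambda>x. x q)) j)"
      using Pv_C[OF b1 j] Pv_C[OF b2 j] Pv_cong[OF I bb j] by (intro conjI)
  qed
qed

lemma Psi_equiv:
  assumes K: "is_ideal m K" and I: "is_ideal n I"
    and g1: "alg_hom m K (n + k) (tensor_ideal n I k J) g1" and g2: "alg_hom m K (n + k) (tensor_ideal n I k J) g2"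
    and ge: "hom_equiv m (tensor_ideal n I k J) g1 g2"
  shows "hom_equiv (m * d) I (PsiC m n g1) (PsiC m n g2)"
  unfolding hom_equiv_def
proof
  fix F assume F: "F \<in> Cinf (m * d)"
  show "ceq I (PsiC m n g1 F) (PsiC m n g2 F)"
    unfolding PsiC_def
  proof (rule cong_cinf_op[OF I F])
    fix q assume q: "q < m * d"
    have dpos: "0 < d" using q by (cases d) auto
    have qd: "q div d < m" using q by (simp add: less_mult_imp_div_less)
    have qm: "q mod d < d" using dpos by simp
    have c1: "g1 (\<lambda>x. x (q div d)) \<in> Cinf (n + k)" using alg_hom_C[OF g1 Cinf_coord[OF qd]] .
    have c2: "g2 (\<lambda>x. x (q div d)) \<in> Cinf (n + k)" using alg_hom_C[OF g2 Cinf_coord[OF qd]] .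
    have "ceq (tensor_ideal n I k J) (g1 (\<lambda>x. x (q div d))) (g2 (\<lambda>x. x (q div d)))"
      using ge Cinf_coord[OF qd] unfolding hom_equiv_def by blast
    then have "cf n (q mod d) (\<lambda>z. g1 (\<lambda>x. x (q div d)) z - g2 (\<lambda>x. x (q div d)) z) \<in> I"
      unfolding ceq_def by (rule cf_tensor[OF I _ qm])
    then have "ceq I (aa n g1 q) (aa n g2 q)"
      unfolding ceq_def aa_def cf_diff[OF c1 c2 qm] .
    then show "aa n g1 q \<in> Cinf n \<and> aa n g2 q \<in> Cinf n \<and> ceq I (aa n g1 q) (aa n g2 q)"
      using aa_C[OF g1 q] aa_C[OF g2 q] by (intro conjI)
  qed
qed

lemma roundtrip1:
  assumes K: "is_ideal m K" and I: "is_ideal n I" and h: "alg_hom (m * d) (Lid m K) n I h"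
  shows "hom_equiv (m * d) I (PsiC m n (PhiC m n h)) h"
  unfolding hom_equiv_def
proof
  fix F assume F: "F \<in> Cinf (m * d)"
  let ?b = "\<lambda>q. h (\<lambda>x. x q)"
  have b: "?b q \<in> Cinf n" if "q < m * d" for q using hb_C[OF h that] .
  have aeq: "aa n (PhiC m n h) q = ?b q" if q: "q < m * d" for q
  proof -
    have dpos: "0 < d" using q by (cases d) auto
    have qd: "q div d < m" using q by (simp add: less_mult_imp_div_less)
    have qm: "q mod d < d" using dpos by simp
    have "PhiC m n h (\<lambda>x. x (q div d)) = Pv n ?b (q div d)"
      unfolding PhiC_def cinf_op_def using qd by simp
    then have "aa n (PhiC m n h) q = cf n (q mod d) (Pv n ?b (q div d))" unfolding aa_def by simp
    also have "\<dots> = ?b (q div d * d + q mod d)" by (rule cf_Pv[OF b qd qm])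
    also have "q div d * d + q mod d = q" by simp
    finally show ?thesis .
  qed
  have "PsiC m n (PhiC m n h) F = cinf_op (m * d) F ?b"
    unfolding PsiC_def cinf_op_def by (rule ext) (rule arg_cong[where f=F], auto simp: aeq)
  moreover have "ceq I (h (cinf_op (m * d) F (\<lambda>q x. x q))) (cinf_op (m * d) F ?b)"
    by (rule alg_hom_op[OF h F]) auto
  ultimately show "ceq I (PsiC m n (PhiC m n h) F) (h F)"
    using ceq_sym[OF I] cinf_op_coord[OF F] by simp
qed

lemma roundtrip2:
  assumes K: "is_ideal m K" and I: "is_ideal n I" and g: "alg_hom m K (n + k) (tensor_ideal n I k J) g"
  shows "hom_equiv m (tensor_ideal n I k J) (PhiC m n (PsiC m n g)) g"
  unfolding hom_equiv_def
proof
  fix f assume f: "f \<in> Cinf m"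
  let ?T = "tensor_ideal n I k J"
  have T: "is_ideal (n + k) ?T" by (rule tensor_ideal[OF I])
  have b: "aa n g q \<in> Cinf n" if "q < m * d" for q by (rule aa_C[OF g that])
  have pe: "PsiC m n g (\<lambda>x. x q) = aa n g q" if "q < m * d" for q
    unfolding PsiC_def cinf_op_def using that by simp
  have "PhiC m n (PsiC m n g) f = cinf_op m f (Pv n (aa n g))"
  proof -
    have "Pv n (\<lambda>q. PsiC m n g (\<lambda>x. x q)) j = Pv n (aa n g) j" if j: "j < m" for j
      unfolding Pv_def by (rule ext, rule sum.cong[OF refl]) (simp add: pe idx_lt[OF j])
    then show ?thesis unfolding PhiC_def cinf_op_def
      by (intro ext arg_cong[where f=f]) auto
  qed
  moreover have gc: "g (\<lambda>x. x j) \<in> Cinf (n + k)" if "j < m" for j using alg_hom_C[OF g Cinf_coord[OF that]] .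
  have c1: "ceq ?T (cinf_op m f (Pv n (aa n g))) (cinf_op m f (\<lambda>j. g (\<lambda>x. x j)))"
  proof (rule cong_cinf_op[OF T f])
    fix j assume j: "j < m"
    show "Pv n (aa n g) j \<in> Cinf (n + k) \<and> g (\<lambda>x. x j) \<in> Cinf (n + k) \<and> ceq ?T (Pv n (aa n g) j) (g (\<lambda>x. x j))"
      using Pv_C[OF b j] gc[OF j] ceq_sym[OF T Pv_aa[OF I g j]] by (intro conjI)
  qed
  have "ceq ?T (g (cinf_op m f (\<lambda>j x. x j))) (cinf_op m f (\<lambda>j. g (\<lambda>x. x j)))"
    by (rule alg_hom_op[OF g f]) auto
  then have c2: "ceq ?T (g f) (cinf_op m f (\<lambda>j. g (\<lambda>x. x j)))" using cinf_op_coord[OF f] by simp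
  ultimately show "ceq ?T (PhiC m n (PsiC m n g) f) (g f)"
    using ceq_trans[OF T c1 ceq_sym[OF T c2]] by simp
qed

lemma naturality:
  assumes K: "is_ideal m K" and I: "is_ideal n I" and I': "is_ideal n' I'"
    and u: "alg_hom n I n' I' u" and h: "alg_hom (m * d) (Lid m K) n I h"
  shows "hom_equiv m (tensor_ideal n' I' k J) (PhiC m n' (u \<circ> h)) (tensor_map n n' k u \<circ> PhiC m n h)"
  unfolding hom_equiv_def
proof
  fix f assume f: "f \<in> Cinf m"
  let ?T = "tensor_ideal n' I' k J"
  have T: "is_ideal (n' + k) ?T" by (rule tensor_ideal[OF I'])
  let ?b = "\<lambda>q. h (\<lambda>x. x q)"
  have b: "?b q \<in> Cinf n" if "q < m * d" for q using hb_C[OF h that] .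
  let ?b2 = "\<lambda>q. cinf_op n (?b q) (\<lambda>i. u (\<lambda>x. x i))"
  let ?b1 = "\<lambda>q. u (?b q)"
  have uc: "u (\<lambda>x. x i) \<in> Cinf n'" if "i < n" for i using alg_hom_C[OF u Cinf_coord[OF that]] .
  have b2C: "?b2 q \<in> Cinf n'" if "q < m * d" for q by (rule Cinf_op[OF b[OF that]]) (rule uc)
  have b1C: "?b1 q \<in> Cinf n'" if "q < m * d" for q using alg_hom_C[OF u b[OF that]] .
  have b12: "ceq I' (?b1 q) (?b2 q)" if q: "q < m * d" for q
  proof -
    have "ceq I' (u (cinf_op n (?b q) (\<lambda>i x. x i))) (?b2 q)"
      by (rule alg_hom_op[OF u b[OF q]]) auto
    then show ?thesis using cinf_op_coord[OF b[OF q]] by simp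
  qed
  have tm: "(tensor_map n n' k u \<circ> PhiC m n h) f = cinf_op m f (Pv n' ?b2)"
  proof
    fix z
    define \<tau> where "\<tau> = (\<lambda>i. if i < n then u (\<lambda>x. x i) z else if i < n + k then z (n' + (i - n)) else 0)"
    have bt: "?b q \<tau> = ?b2 q z" if "q < m * d" for q
    proof -
      have "?b q \<tau> = ?b q (\<lambda>i. if i < n then \<tau> i else 0)" by (rule Cinf_dep[OF b[OF that]])
      also have "(\<lambda>i. if i < n then \<tau> i else 0) = (\<lambda>i. if i < n then u (\<lambda>x. x i) z else 0)"
        unfolding \<tau>_def by auto
      finally show ?thesis unfolding cinf_op_def by simp
    qed
    have st: "shift_fun n (e i) \<tau> = shift_fun n' (e i) z" if "i < d" for i
    proof -
      have "(\<lambda>l. \<tau> (n + l)) = (\<lambda>l. if l < k then z (n' + l) else 0)" unfolding \<tau>_def by auto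
      then show ?thesis unfolding shift_fun_def using Cinf_dep[OF eC[OF that], of "\<lambda>l. z (n' + l)"] by simp
    qed
    have "Pv n ?b j \<tau> = Pv n' ?b2 j z" if j: "j < m" for j
      unfolding Pv_def by (rule sum.cong[OF refl]) (simp add: bt st idx_lt[OF j])
    then show "(tensor_map n n' k u \<circ> PhiC m n h) f z = cinf_op m f (Pv n' ?b2) z"
      unfolding tensor_map_def PhiC_def cinf_op_def comp_def \<tau>_def[symmetric]
      by (intro arg_cong[where f=f]) auto
  qed
  have "ceq ?T (cinf_op m f (Pv n' ?b1)) (cinf_op m f (Pv n' ?b2))"
  proof (rule cong_cinf_op[OF T f])
    fix j assume j: "j < m"
    show "Pv n' ?b1 j \<in> Cinf (n' + k) \<and> Pv n' ?b2 j \<in> Cinf (n' + k) \<and> ceq ?T (Pv n' ?b1 j) (Pv n' ?b2 j)"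
      using Pv_C[OF b1C j] Pv_C[OF b2C j] Pv_cong[OF I' b12 j] by (intro conjI)
  qed
  moreover have "PhiC m n' (u \<circ> h) f = cinf_op m f (Pv n' ?b1)" unfolding PhiC_def by simp
  ultimately show "ceq ?T (PhiC m n' (u \<circ> h) f) ((tensor_map n n' k u \<circ> PhiC m n h) f)"
    using tm by simp
qed

end

theorem lemma2p26:
  fixes k m :: nat and J K :: "fn set"
  assumes W: "local_artinian k J"
    and Y: "is_ideal m K"
  shows "\<exists>p L (\<Phi> :: nat \<Rightarrow> fn set \<Rightarrow> (fn \<Rightarrow> fn) \<Rightarrow> (fn \<Rightarrow> fn))
                (\<Psi> :: nat \<Rightarrow> fn set \<Rightarrow> (fn \<Rightarrow> fn) \<Rightarrow> (fn \<Rightarrow> fn)).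
     is_ideal p L \<and>
     (\<forall>n I. is_ideal n I \<longrightarrow>
        (\<forall>h. alg_hom p L n I h \<longrightarrow> alg_hom m K (n + k) (tensor_ideal n I k J) (\<Phi> n I h)) \<and>
        (\<forall>g. alg_hom m K (n + k) (tensor_ideal n I k J) g \<longrightarrow> alg_hom p L n I (\<Psi> n I g)) \<and>
        (\<forall>h1 h2. alg_hom p L n I h1 \<longrightarrow> alg_hom p L n I h2 \<longrightarrow> hom_equiv p I h1 h2 \<longrightarrow>
            hom_equiv m (tensor_ideal n I k J) (\<Phi> n I h1) (\<Phi> n I h2)) \<and>
        (\<forall>g1 g2. alg_hom m K (n + k) (tensor_ideal n I k J) g1 \<longrightarrow>
            alg_hom m K (n + k) (tensor_ideal n I k J) g2 \<longrightarrow>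
            hom_equiv m (tensor_ideal n I k J) g1 g2 \<longrightarrow>
            hom_equiv p I (\<Psi> n I g1) (\<Psi> n I g2)) \<and>
        (\<forall>h. alg_hom p L n I h \<longrightarrow> hom_equiv p I (\<Psi> n I (\<Phi> n I h)) h) \<and>
        (\<forall>g. alg_hom m K (n + k) (tensor_ideal n I k J) g \<longrightarrow>
            hom_equiv m (tensor_ideal n I k J) (\<Phi> n I (\<Psi> n I g)) g)) \<and>
     (\<forall>n I n' I' u h. is_ideal n I \<longrightarrow> is_ideal n' I' \<longrightarrow> alg_hom n I n' I' u \<longrightarrow>
        alg_hom p L n I h \<longrightarrow>
        hom_equiv m (tensor_ideal n' I' k J) (\<Phi> n' I' (u \<circ> h))
                                            (tensor_map n n' k u \<circ> \<Phi> n I h))"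
proof -
  obtain d e M N a where ws: "wsetup k J d e M N a" using wsetup_exists[OF W] by blast
  interpret wsetup k J d e M N a by (rule ws)
  show ?thesis
    apply (rule exI[of _ "m * d"], rule exI[of _ "Lid m K"],
           rule exI[of _ "\<lambda>n I h. PhiC m n h"], rule exI[of _ "\<lambda>n I g. PsiC m n g"])
    apply (intro conjI allI impI)
    subgoal by (rule L_ideal[OF Y])
    subgoal for n I h by (simp add: Phi_hom[OF Y])
    subgoal for n I g by (simp add: Psi_hom[OF Y])
    subgoal for n I h1 h2 by (simp add: Phi_equiv[OF Y])
    subgoal for n I g1 g2 by (simp add: Psi_equiv[OF Y])
    subgoal for n I h by (simp add: roundtrip1[OF Y])
    subgoal for n I g by (simp add: roundtrip2[OF Y])
    subgoal for n I n' I' u h by (simp add: naturality[OF Y])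
    done
qed


end
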